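(* Consider a fully connected gossip network with a source and $n$ end-nodes as described in the context, and let $\rho=\lambda_e/\lambda$. Let $F^{(n)}=\lim_{t\to\infty}\mathbb{E}[F_1(t)]$ denote the average binary freshness of a single end-node. Then, as $n\to\infty$, $F^{(n)}$ decreases to $0$ as $n^{-\rho}$ when $0<\rho<1$; as $\frac{\log n}{n}$ when $\rho=1$; and as $n^{-1}$ when $\rho>1$ (in each case, $F^{(n)}$ is bounded above and below by positive constant multiples of the stated function for all sufficiently large $n$).
   Context: Model: The information at the source is updated (a new version is generated) according to a Poisson process of rate $\lambda_e>0$. The source sends its current version to each end-node $j\in\{1,\dots,n\}$ according to a Poisson process of rate $\lambda/n$, where $\lambda>0$. The end-nodes are fully connected: each end-node $i$ sends its stored version to each other end-node $j\ne i$ according to a Poisson process of rate $\lambda/(n-1)$. All processes are independent. A node receiving a version keeps the fresher of its stored and received versions. The binary freshness $F_j(t)$ of node $j$ is $1$ if node $j$ stores the current source version at time $t$ and $0$ otherwise; thus it becomes $0$ whenever the source generates a new version, becomes $1$ when the source updates node $j$, and becomes $\max(F_i,F_j)$ when node $i$ updates node $j$. *)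

theory Defs
  imports "HOL-Analysis.Analysis"
begin

text \<open>
  The end-nodes are indexed by 0,...,n-1 (node 0 plays the role of node 1 of the paper).
  A state is the set S \<subseteq> {..<n} of end-nodes that currently store the current source
  version (i.e. the nodes j with F_j = 1).  Every independent Poisson process of the model
  is an event with a rate and a deterministic effect on the state.
\<close>

definition gossip_events :: "real \<Rightarrow> real \<Rightarrow> nat \<Rightarrow> (real \<times> (nat set \<Rightarrow> nat set)) list" where
  "gossip_events lam_e lam n =
     [(lam_e, (\<lambda>S. {}))]
     @ map (\<lambda>j. (lam / real n, (\<lambda>S. insert j S))) [0..<n]
     @ concat (map (\<lambda>i. map (\<lambda>j. (lam / real (n - 1),
                                    (\<lambda>S. if i \<in> S then insert j S else S)))
                              (filter (\<lambda>j. j \<noteq> i) [0..<n])) [0..<n])"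

definition gossip_generator :: "real \<Rightarrow> real \<Rightarrow> nat \<Rightarrow> nat set \<Rightarrow> nat set \<Rightarrow> real" where
  "gossip_generator lam_e lam n S T =
     (\<Sum>e\<leftarrow>gossip_events lam_e lam n.
        fst e * ((if snd e S = T then 1 else 0) - (if S = T then 1 else 0)))"

fun state_mat_pow :: "nat \<Rightarrow> (nat set \<Rightarrow> nat set \<Rightarrow> real) \<Rightarrow> nat \<Rightarrow> nat set \<Rightarrow> nat set \<Rightarrow> real" where
  "state_mat_pow n Q 0 S T = (if S = T then 1 else 0)"
| "state_mat_pow n Q (Suc k) S T = (\<Sum>U\<in>Pow {..<n}. state_mat_pow n Q k S U * Q U T)"

definition gossip_transition :: "real \<Rightarrow> real \<Rightarrow> nat \<Rightarrow> real \<Rightarrow> nat set \<Rightarrow> nat set \<Rightarrow> real" where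
  "gossip_transition lam_e lam n t S T =
     (\<Sum>k. t ^ k / fact k * state_mat_pow n (gossip_generator lam_e lam n) k S T)"

definition expected_freshness :: "real \<Rightarrow> real \<Rightarrow> nat \<Rightarrow> nat set \<Rightarrow> real \<Rightarrow> real" where
  "expected_freshness lam_e lam n S0 t =
     (\<Sum>T\<in>Pow {..<n}. gossip_transition lam_e lam n t S0 T * (if 0 \<in> T then 1 else 0))"

end

theory Submission
  imports Defs "HOL-Analysis.Analysis" "HOL-Real_Asymp.Real_Asymp"
begin

lemma ode_ub:
  fixes f g :: "real \<Rightarrow> real"
  assumes a: "a > 0" and d: "\<And>t. (f has_real_derivative (-a * f t + g t)) (at t)"
  and g: "\<And>t. t \<ge> T \<Longrightarrow> g t \<le> M" and tT: "t \<ge> T"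
  shows "f t \<le> M/a + exp (-a*(t-T)) * (f T - M/a)"
proof -
  define y where "y = (\<lambda>u. exp (a*u) * (f u - M/a))"
  have dy: "(y has_real_derivative exp (a*u) * (g u - M)) (at u)" for u
    unfolding y_def using a
    by (auto intro!: derivative_eq_intros d simp: field_simps)
  have "y t \<le> y T"
    by (rule deriv_nonpos_imp_antimono[OF dy]) (use g tT in \<open>auto simp: mult_nonneg_nonpos\<close>)
  then have "exp (a*t) * (f t - M/a) \<le> exp (a*T) * (f T - M/a)" by (simp add: y_def)
  then have "f t - M/a \<le> exp (a*T) * (f T - M/a) / exp (a*t)"
    by (simp add: field_simps)
  also have "exp (a*T) * (f T - M/a) / exp (a*t) = exp (-a*(t-T)) * (f T - M/a)"
  proof -
    have e: "exp (-a*(t-T)) = exp (a*T) / exp (a*t)" by (simp add: exp_diff[symmetric] algebra_simps)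
    show ?thesis unfolding e by simp
  qed
  finally show ?thesis by simp
qed

lemma exp_decay_eventually:
  fixes a C \<eta> T :: real
  assumes "a > 0" "\<eta> > 0"
  shows "eventually (\<lambda>t. exp (-a*(t-T)) * C < \<eta>) at_top"
proof -
  have "((\<lambda>t. exp (-a*(t-T)) * C) \<longlongrightarrow> 0) at_top"
    using assms by real_asymp
  then show ?thesis using assms by (simp add: order_tendstoD)
qed

lemma ode_lim:
  fixes f g :: "real \<Rightarrow> real"
  assumes a: "a > 0" and d: "\<And>t. (f has_real_derivative (-a * f t + g t)) (at t)"
  and gl: "(g \<longlongrightarrow> L) at_top"
  shows "(f \<longlongrightarrow> L/a) at_top"
proof (rule order_tendstoI)
  fix y assume y: "y > L/a"
  define \<eta> where "\<eta> = (y - L/a)/2"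
  have \<eta>: "\<eta> > 0" using y by (simp add: \<eta>_def)
  define M where "M = L + a*\<eta>"
  have "L < M" using a \<eta> by (simp add: M_def)
  then have "eventually (\<lambda>t. g t < M) at_top" using gl by (simp add: order_tendstoD)
  then obtain T where T: "\<And>t. t \<ge> T \<Longrightarrow> g t < M" by (auto simp: eventually_at_top_linorder)
  have "eventually (\<lambda>t. t \<ge> T \<and> exp (-a*(t-T)) * (f T - M/a) < \<eta>) at_top"
    using eventually_conj[OF eventually_ge_at_top[of T] exp_decay_eventually[OF a \<eta>]] by simp
  then show "eventually (\<lambda>t. f t < y) at_top"
  proof (rule eventually_mono)
    fix t assume t: "t \<ge> T \<and> exp (-a*(t-T)) * (f T - M/a) < \<eta>"
    have 1: "f t \<le> M/a + exp (-a*(t-T)) * (f T - M/a)"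
      by (rule ode_ub[OF a d]) (use T t in \<open>auto intro: less_imp_le\<close>)
    have 2: "M/a = L/a + \<eta>" using a by (simp add: M_def field_simps)
    have 3: "\<eta> + \<eta> = y - L/a" by (simp add: \<eta>_def)
    show "f t < y" using 1 2 3 conjunct2[OF t] by linarith
  qed
next
  fix y assume y: "y < L/a"
  define \<eta> where "\<eta> = (L/a - y)/2"
  have \<eta>: "\<eta> > 0" using y by (simp add: \<eta>_def)
  define M where "M = L - a*\<eta>"
  have "M < L" using a \<eta> by (simp add: M_def)
  then have "eventually (\<lambda>t. g t > M) at_top" using gl by (simp add: order_tendstoD)
  then obtain T where T: "\<And>t. t \<ge> T \<Longrightarrow> g t > M" by (auto simp: eventually_at_top_linorder)
  have d': "\<And>t. ((\<lambda>t. - f t) has_real_derivative (-a * (- f t) + (- g t))) (at t)"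
    using d by (auto intro!: derivative_eq_intros)
  have "eventually (\<lambda>t. t \<ge> T \<and> exp (-a*(t-T)) * (- f T - (-M)/a) < \<eta>) at_top"
    using eventually_conj[OF eventually_ge_at_top[of T] exp_decay_eventually[OF a \<eta>]] by simp
  then show "eventually (\<lambda>t. f t > y) at_top"
  proof (rule eventually_mono)
    fix t assume t: "t \<ge> T \<and> exp (-a*(t-T)) * (- f T - (-M)/a) < \<eta>"
    have "- f t \<le> (-M)/a + exp (-a*(t-T)) * (- f T - (-M)/a)"
      by (rule ode_ub[OF a d', of T "-M"]) (use T t in \<open>auto intro: less_imp_le\<close>)
    moreover have "(-M)/a = -(L/a) + \<eta>" using a by (simp add: M_def field_simps)
    moreover have "\<eta> + \<eta> = L/a - y" by (simp add: \<eta>_def)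
    ultimately show "f t > y" using conjunct2[OF t] by linarith
  qed
qed


lemma sum_list_concat_map:
  "sum_list (map f (concat (map g xs))) = sum_list (map (\<lambda>x. sum_list (map f (g x))) xs)"
  by (induction xs) auto

lemma gen_action_list:
  fixes es :: "(real \<times> (nat set \<Rightarrow> nat set)) list" and P :: "nat set set"
  assumes fin: "finite P" and U: "U \<in> P" and cl: "\<And>e. e \<in> set es \<Longrightarrow> snd e U \<in> P"
  shows "(\<Sum>T\<in>P. (\<Sum>e\<leftarrow>es. fst e * ((if snd e U = T then 1 else 0) - (if U = T then 1 else 0))) * h T)
         = (\<Sum>e\<leftarrow>es. fst e * (h (snd e U) - h U))"
  using cl
proof (induction es)
  case Nil
  then show ?case by simp
next
  case (Cons e es)
  have "(\<Sum>T\<in>P. (\<Sum>e\<leftarrow>e # es. fst e * ((if snd e U = T then 1 else 0) - (if U = T then 1 else 0))) * h T)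
     = (\<Sum>T\<in>P. fst e * ((if snd e U = T then 1 else 0) - (if U = T then 1 else 0)) * h T)
       + (\<Sum>T\<in>P. (\<Sum>e\<leftarrow>es. fst e * ((if snd e U = T then 1 else 0) - (if U = T then 1 else 0))) * h T)"
    by (simp add: distrib_right sum.distrib)
  also have "(\<Sum>T\<in>P. fst e * ((if snd e U = T then 1 else 0) - (if U = T then 1 else 0)) * h T)
      = fst e * (h (snd e U) - h U)"
  proof -
    have "(\<Sum>T\<in>P. fst e * ((if snd e U = T then 1 else 0) - (if U = T then 1 else 0)) * h T)
       = fst e * ((\<Sum>T\<in>P. (if snd e U = T then h T else 0)) - (\<Sum>T\<in>P. (if U = T then h T else 0)))"
    proof -
      have eq: "\<And>T. fst e * ((if snd e U = T then 1 else 0) - (if U = T then 1 else 0)) * h T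
          = fst e * ((if snd e U = T then h T else 0) - (if U = T then h T else 0))" by simp
      have "(\<Sum>T\<in>P. fst e * ((if snd e U = T then 1 else 0) - (if U = T then 1 else 0)) * h T)
         = (\<Sum>T\<in>P. fst e * ((if snd e U = T then h T else 0) - (if U = T then h T else 0)))"
        by (rule sum.cong[OF refl]) (rule eq)
      also have "\<dots> = fst e * ((\<Sum>T\<in>P. (if snd e U = T then h T else 0)) - (\<Sum>T\<in>P. (if U = T then h T else 0)))"
        by (simp only: sum_distrib_left[symmetric] sum_subtractf)
      finally show ?thesis .
    qed
    also have "\<dots> = fst e * (h (snd e U) - h U)"
      using fin U Cons.prems by (simp add: sum.delta)
    finally show ?thesis .
  qed
  finally show ?case using Cons by simp
qed

lemma events_closed:
  assumes "e \<in> set (gossip_events le l n)" "U \<subseteq> {..<n}"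
  shows "snd e U \<subseteq> {..<n}"
  using assms unfolding gossip_events_def by (auto split: if_splits)

lemma gen_action:
  assumes "U \<subseteq> {..<n}"
  shows "(\<Sum>T\<in>Pow {..<n}. gossip_generator le l n U T * h T)
       = (\<Sum>e\<leftarrow>gossip_events le l n. fst e * (h (snd e U) - h U))"
  unfolding gossip_generator_def
  by (rule gen_action_list) (use assms events_closed in auto)

definition hit :: "nat set \<Rightarrow> nat set \<Rightarrow> real" where
  "hit A T = (if A \<inter> T = {} then 0 else 1)"

lemma gen_rowsum:
  assumes "U \<subseteq> {..<n}"
  shows "(\<Sum>T\<in>Pow {..<n}. gossip_generator le l n U T) = 0"
  using gen_action[OF assms, of le l "\<lambda>_. 1"] by simp

lemma events_sum:
  "(\<Sum>e\<leftarrow>gossip_events le l n. fst e * (h (snd e U) - h U))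
   = le * (h {} - h U) + (\<Sum>j<n. l / real n * (h (insert j U) - h U))
     + (\<Sum>i<n. \<Sum>j\<in>{..<n} - {i}. l / real (n - 1) * (h (if i \<in> U then insert j U else U) - h U))"
proof -
  have fl: "sum_list (map f (filter (\<lambda>j. j \<noteq> i) [0..<n])) = (\<Sum>j\<in>{..<n}-{i}. f j)" for f :: "nat \<Rightarrow> real" and i
  proof -
    have s: "set (filter (\<lambda>j. j \<noteq> i) [0..<n]) = {..<n} - {i}" by auto
    show ?thesis by (subst sum_list_distinct_conv_sum_set) (simp_all only: s distinct_filter distinct_upt)
  qed
  have fu: "sum_list (map f [0..<n]) = (\<Sum>j<n. f j)" for f :: "nat \<Rightarrow> real"
    by (simp add: sum_list_distinct_conv_sum_set lessThan_atLeast0)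
  show ?thesis
    unfolding gossip_events_def
    by (simp only: map_append sum_list_append sum_list_concat_map map_map o_def fl fu
       list.map sum_list.Cons sum_list.Nil prod.sel add_0_right)
qed


lemma hit_empty[simp]: "hit A {} = 0" by (simp add: hit_def)

lemma events_hit:
  assumes A: "A \<subseteq> {..<n}"
  shows "(\<Sum>e\<leftarrow>gossip_events le l n. fst e * (hit A (snd e U) - hit A U))
   = - le * hit A U + l / real n * card A * (1 - hit A U)
     + l / real (n - 1) * card A * (\<Sum>i\<in>{..<n} - A. hit (insert i A) U - hit A U)"
proof -
  have b: "hit A (insert j U) - hit A U = (if j \<in> A then 1 - hit A U else 0)" for j
    by (auto simp: hit_def)
  have c: "hit A (if i \<in> U then insert j U else U) - hit A U
      = (if i \<notin> A then (if j \<in> A then hit (insert i A) U - hit A U else 0) else 0)" for i j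
    by (auto simp: hit_def)
  have sb: "(\<Sum>j<n. l / real n * (hit A (insert j U) - hit A U)) = l / real n * card A * (1 - hit A U)"
  proof -
    have "(\<Sum>j<n. l / real n * (hit A (insert j U) - hit A U)) = (\<Sum>j\<in>{..<n}. if j \<in> A then l / real n * (1 - hit A U) else 0)"
      by (rule sum.cong) (auto simp: b)
    also have "\<dots> = (\<Sum>j\<in>{..<n} \<inter> A. l / real n * (1 - hit A U))"
      by (subst sum.inter_restrict) auto
    moreover have "{..<n} \<inter> A = A" using A by auto
    ultimately show ?thesis by simp
  qed
  have sc: "(\<Sum>i<n. \<Sum>j\<in>{..<n} - {i}. l / real (n - 1) * (hit A (if i \<in> U then insert j U else U) - hit A U))
      = l / real (n - 1) * card A * (\<Sum>i\<in>{..<n} - A. hit (insert i A) U - hit A U)"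
  proof -
    have inner: "(\<Sum>j\<in>{..<n} - {i}. l / real (n - 1) * (hit A (if i \<in> U then insert j U else U) - hit A U))
        = (if i \<notin> A then l / real (n - 1) * card A * (hit (insert i A) U - hit A U) else 0)" if i: "i < n" for i
    proof (cases "i \<in> A")
      case True
      then show ?thesis by (simp add: c)
    next
      case False
      have "(\<Sum>j\<in>{..<n} - {i}. l / real (n - 1) * (hit A (if i \<in> U then insert j U else U) - hit A U))
         = (\<Sum>j\<in>{..<n} - {i}. if j \<in> A then l / real (n - 1) * (hit (insert i A) U - hit A U) else 0)"
        by (rule sum.cong) (auto simp: c False)
      also have "\<dots> = (\<Sum>j\<in>({..<n} - {i}) \<inter> A. l / real (n - 1) * (hit (insert i A) U - hit A U))"
        by (subst sum.inter_restrict) auto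
      moreover have "({..<n} - {i}) \<inter> A = A" using A False by auto
      ultimately show ?thesis using False by simp
    qed
    have "(\<Sum>i<n. \<Sum>j\<in>{..<n} - {i}. l / real (n - 1) * (hit A (if i \<in> U then insert j U else U) - hit A U))
       = (\<Sum>i\<in>{..<n}. if i \<notin> A then l / real (n - 1) * card A * (hit (insert i A) U - hit A U) else 0)"
      by (rule sum.cong[OF refl], rule inner) simp
    also have "\<dots> = (\<Sum>i\<in>{..<n} \<inter> - A. l / real (n - 1) * card A * (hit (insert i A) U - hit A U))"
      by (subst sum.inter_restrict) auto
    also have "{..<n} \<inter> - A = {..<n} - A" by auto
    finally show ?thesis by (simp add: sum_distrib_left)
  qed
  show ?thesis unfolding events_sum sb sc by simp
qed

lemma Q_bound:
  "\<bar>gossip_generator le l n U T\<bar> \<le> (\<Sum>e\<leftarrow>gossip_events le l n. \<bar>fst e\<bar>)"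
proof -
  have "\<bar>gossip_generator le l n U T\<bar> \<le> (\<Sum>e\<leftarrow>gossip_events le l n.
          \<bar>fst e * ((if snd e U = T then 1 else 0) - (if U = T then 1 else 0))\<bar>)"
    unfolding gossip_generator_def by (rule order_trans[OF sum_list_abs]) (simp add: o_def)
  also have "\<dots> \<le> (\<Sum>e\<leftarrow>gossip_events le l n. \<bar>fst e\<bar>)"
    by (rule sum_list_mono) (auto simp: abs_mult)
  finally show ?thesis .
qed

lemma pow_bound:
  assumes q: "\<And>U T. \<bar>Q U T\<bar> \<le> q" and q0: "q \<ge> 0"
  shows "\<bar>state_mat_pow n Q k S T\<bar> \<le> (2^n * q)^k"
proof (induction k arbitrary: T)
  case 0
  then show ?case by simp
next
  case (Suc k)
  have "\<bar>state_mat_pow n Q (Suc k) S T\<bar> \<le> (\<Sum>U\<in>Pow {..<n}. \<bar>state_mat_pow n Q k S U * Q U T\<bar>)"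
    by simp
  also have "\<dots> \<le> (\<Sum>U\<in>Pow {..<n}. (2^n * q)^k * q)"
    by (rule sum_mono) (auto simp: abs_mult q0 intro!: mult_mono Suc q)
  also have "\<dots> = (2^n * q)^(Suc k)" by (simp add: card_Pow)
  finally show ?case .
qed

definition cpw :: "real \<Rightarrow> real \<Rightarrow> nat \<Rightarrow> nat set \<Rightarrow> nat set \<Rightarrow> nat \<Rightarrow> real" where
  "cpw le l n S T k = state_mat_pow n (gossip_generator le l n) k S T / fact k"

lemma cpw_summable: "summable (\<lambda>k. cpw le l n S T k * x^k)"
proof -
  define q where "q = (\<Sum>e\<leftarrow>gossip_events le l n. \<bar>fst e\<bar>)"
  have q0: "q \<ge> 0" unfolding q_def by (rule sum_list_nonneg) auto
  define B where "B = 2^n * q"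
  have B0: "B \<ge> 0" using q0 by (simp add: B_def)
  show ?thesis
  proof (rule summable_comparison_test'[OF summable_exp[of "B * \<bar>x\<bar>"]])
    fix k :: nat
    have "norm (cpw le l n S T k * x^k) = \<bar>state_mat_pow n (gossip_generator le l n) k S T\<bar> / fact k * \<bar>x\<bar>^k"
      by (simp add: cpw_def abs_mult power_abs)
    also have "\<dots> \<le> B^k / fact k * \<bar>x\<bar>^k"
    proof -
      have "\<bar>state_mat_pow n (gossip_generator le l n) k S T\<bar> \<le> B^k"
        unfolding B_def by (rule pow_bound[OF _ q0]) (unfold q_def, rule Q_bound)
      then show ?thesis by (intro mult_right_mono divide_right_mono) auto
    qed
    also have "\<dots> = inverse (fact k) * (B * \<bar>x\<bar>)^k" by (simp add: power_mult_distrib field_simps)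
    finally show "norm (cpw le l n S T k * x^k) \<le> inverse (fact k) * (B * \<bar>x\<bar>)^k" .
  qed
qed

lemma transition_eq: "gossip_transition le l n t S T = (\<Sum>k. cpw le l n S T k * t^k)"
  unfolding gossip_transition_def cpw_def by (simp add: field_simps)

lemma transition_deriv:
  "((\<lambda>t. gossip_transition le l n t S T) has_real_derivative
     (\<Sum>U\<in>Pow {..<n}. gossip_transition le l n t S U * gossip_generator le l n U T)) (at t)"
proof -
  have d: "((\<lambda>t. \<Sum>k. cpw le l n S T k * t^k) has_real_derivative (\<Sum>k. diffs (cpw le l n S T) k * t^k)) (at t)"
    by (rule termdiffs_strong_converges_everywhere) (rule cpw_summable)
  have "(\<Sum>k. diffs (cpw le l n S T) k * t^k)
      = (\<Sum>k. \<Sum>U\<in>Pow {..<n}. cpw le l n S U k * t^k * gossip_generator le l n U T)"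
  proof (rule suminf_cong)
    fix k
    show "diffs (cpw le l n S T) k * t^k = (\<Sum>U\<in>Pow {..<n}. cpw le l n S U k * t^k * gossip_generator le l n U T)"
    proof -
      have "diffs (cpw le l n S T) k * t^k = state_mat_pow n (gossip_generator le l n) (Suc k) S T / fact k * t^k"
      proof -
        have f: "of_nat (Suc k) / fact (Suc k) = (1::real) / fact k"
          by (simp del: of_nat_Suc)
        show ?thesis unfolding diffs_def cpw_def
          using f by (metis (no_types, lifting) times_divide_eq_right mult.commute divide_divide_eq_left mult_1 times_divide_eq_left)
      qed
      also have "\<dots> = (\<Sum>U\<in>Pow {..<n}. cpw le l n S U k * t^k * gossip_generator le l n U T)"
        by (simp add: cpw_def sum_distrib_left sum_distrib_right sum_divide_distrib algebra_simps)
      finally show ?thesis .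
    qed
  qed
  also have "\<dots> = (\<Sum>U\<in>Pow {..<n}. \<Sum>k. cpw le l n S U k * t^k * gossip_generator le l n U T)"
    by (rule suminf_sum) (intro summable_mult2 cpw_summable)
  also have "\<dots> = (\<Sum>U\<in>Pow {..<n}. gossip_transition le l n t S U * gossip_generator le l n U T)"
    by (simp add: transition_eq suminf_mult2[OF cpw_summable])
  finally show ?thesis using d by (simp add: transition_eq)
qed

lemma transition_zero: "gossip_transition le l n 0 S T = (if S = T then 1 else 0)"
proof -
  have "(\<lambda>k. cpw le l n S T k * 0^k) = (\<lambda>k. if k = 0 then (if S = T then 1 else 0) else 0)"
    by (rule ext) (auto simp: cpw_def)
  then show ?thesis unfolding transition_eq using sums_single[of 0 "\<lambda>_. if S = T then 1 else 0::real"]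
    by (simp add: sums_iff)
qed


definition xA :: "real \<Rightarrow> real \<Rightarrow> nat \<Rightarrow> nat set \<Rightarrow> nat set \<Rightarrow> real \<Rightarrow> real" where
  "xA le l n S0 A t = (\<Sum>T\<in>Pow {..<n}. gossip_transition le l n t S0 T * hit A T)"

definition msum :: "real \<Rightarrow> real \<Rightarrow> nat \<Rightarrow> nat set \<Rightarrow> real \<Rightarrow> real" where
  "msum le l n S0 t = (\<Sum>T\<in>Pow {..<n}. gossip_transition le l n t S0 T)"

lemma weighted_deriv:
  "((\<lambda>t. \<Sum>T\<in>Pow {..<n}. gossip_transition le l n t S0 T * h T) has_real_derivative
     (\<Sum>U\<in>Pow {..<n}. gossip_transition le l n t S0 U *
        (\<Sum>e\<leftarrow>gossip_events le l n. fst e * (h (snd e U) - h U)))) (at t)"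
proof -
  have "((\<lambda>t. \<Sum>T\<in>Pow {..<n}. gossip_transition le l n t S0 T * h T) has_real_derivative
     (\<Sum>T\<in>Pow {..<n}. (\<Sum>U\<in>Pow {..<n}. gossip_transition le l n t S0 U * gossip_generator le l n U T) * h T)) (at t)"
    by (intro DERIV_sum DERIV_cmult_right transition_deriv)
  also have "(\<Sum>T\<in>Pow {..<n}. (\<Sum>U\<in>Pow {..<n}. gossip_transition le l n t S0 U * gossip_generator le l n U T) * h T)
     = (\<Sum>U\<in>Pow {..<n}. gossip_transition le l n t S0 U * (\<Sum>T\<in>Pow {..<n}. gossip_generator le l n U T * h T))"
  proof -
    have "(\<Sum>T\<in>Pow {..<n}. (\<Sum>U\<in>Pow {..<n}. gossip_transition le l n t S0 U * gossip_generator le l n U T) * h T)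
       = (\<Sum>T\<in>Pow {..<n}. \<Sum>U\<in>Pow {..<n}. gossip_transition le l n t S0 U * (gossip_generator le l n U T * h T))"
      by (simp only: sum_distrib_right mult.assoc)
    also have "\<dots> = (\<Sum>U\<in>Pow {..<n}. \<Sum>T\<in>Pow {..<n}. gossip_transition le l n t S0 U * (gossip_generator le l n U T * h T))"
      by (rule sum.swap)
    also have "\<dots> = (\<Sum>U\<in>Pow {..<n}. gossip_transition le l n t S0 U * (\<Sum>T\<in>Pow {..<n}. gossip_generator le l n U T * h T))"
      by (simp only: sum_distrib_left)
    finally show ?thesis .
  qed
  also have "\<dots> = (\<Sum>U\<in>Pow {..<n}. gossip_transition le l n t S0 U *
        (\<Sum>e\<leftarrow>gossip_events le l n. fst e * (h (snd e U) - h U)))"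
    by (rule sum.cong[OF refl]) (subst gen_action, auto)
  finally show ?thesis .
qed

lemma msum_one:
  assumes "S0 \<subseteq> {..<n}"
  shows "msum le l n S0 t = 1"
proof -
  have d: "\<forall>t. DERIV (msum le l n S0) t :> 0"
  proof
    fix t
    show "DERIV (msum le l n S0) t :> 0"
      using weighted_deriv[of le l n S0 "\<lambda>_. 1" t] unfolding msum_def by simp
  qed
  have "msum le l n S0 t = msum le l n S0 0" by (rule DERIV_isconst_all[OF d])
  also have "\<dots> = 1" using assms
    by (simp add: msum_def transition_zero sum.delta)
  finally show ?thesis .
qed

lemma alg_sum:
  fixes P h :: "'a \<Rightarrow> real" and H :: "'b \<Rightarrow> 'a \<Rightarrow> real"
  shows "(\<Sum>u\<in>X. P u * (- le * h u + c1 * (1 - h u) + c2 * (\<Sum>i\<in>I. H i u - h u)))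
    = - le * (\<Sum>u\<in>X. P u * h u) + c1 * ((\<Sum>u\<in>X. P u) - (\<Sum>u\<in>X. P u * h u))
      + c2 * (\<Sum>i\<in>I. (\<Sum>u\<in>X. P u * H i u) - (\<Sum>u\<in>X. P u * h u))"
proof -
  have "(\<Sum>u\<in>X. P u * (- le * h u + c1 * (1 - h u) + c2 * (\<Sum>i\<in>I. H i u - h u)))
     = (\<Sum>u\<in>X. - le * (P u * h u) + c1 * (P u - P u * h u) + c2 * (\<Sum>i\<in>I. P u * H i u - P u * h u))"
    by (rule sum.cong) (simp_all add: algebra_simps sum_distrib_left sum_subtractf)
  also have "\<dots> = - le * (\<Sum>u\<in>X. P u * h u) + c1 * ((\<Sum>u\<in>X. P u) - (\<Sum>u\<in>X. P u * h u))
      + c2 * (\<Sum>u\<in>X. \<Sum>i\<in>I. P u * H i u - P u * h u)"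
    by (simp only: sum.distrib sum_distrib_left[symmetric] sum_subtractf sum_negf mult_minus_left)
  also have "(\<Sum>u\<in>X. \<Sum>i\<in>I. P u * H i u - P u * h u) = (\<Sum>i\<in>I. \<Sum>u\<in>X. P u * H i u - P u * h u)"
    by (rule sum.swap)
  also have "\<dots> = (\<Sum>i\<in>I. (\<Sum>u\<in>X. P u * H i u) - (\<Sum>u\<in>X. P u * h u))"
    by (simp add: sum_subtractf)
  finally show ?thesis .
qed

definition alpha :: "real \<Rightarrow> real \<Rightarrow> nat \<Rightarrow> nat \<Rightarrow> real" where
  "alpha le l n k = le + l / real n * k + l / real (n - 1) * k * (real n - k)"

lemma xA_deriv:
  assumes A: "A \<subseteq> {..<n}" and S0: "S0 \<subseteq> {..<n}"
  shows "(xA le l n S0 A has_real_derivative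
     (- alpha le l n (card A) * xA le l n S0 A t
      + (l / real n * card A + l / real (n - 1) * card A * (\<Sum>i\<in>{..<n} - A. xA le l n S0 (insert i A) t)))) (at t)"
proof -
  let ?P = "\<lambda>U. gossip_transition le l n t S0 U"
  let ?X = "\<lambda>B. xA le l n S0 B t"
  have d: "(xA le l n S0 A has_real_derivative
      (\<Sum>U\<in>Pow {..<n}. ?P U * (- le * hit A U + l / real n * card A * (1 - hit A U)
     + l / real (n - 1) * card A * (\<Sum>i\<in>{..<n} - A. hit (insert i A) U - hit A U)))) (at t)"
    using weighted_deriv[of le l n S0 "hit A" t] unfolding events_hit[OF A] xA_def[abs_def] .
  have "(\<Sum>U\<in>Pow {..<n}. ?P U * (- le * hit A U + l / real n * card A * (1 - hit A U)
     + l / real (n - 1) * card A * (\<Sum>i\<in>{..<n} - A. hit (insert i A) U - hit A U)))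
     = - le * ?X A + l / real n * card A * (msum le l n S0 t - ?X A)
       + l / real (n - 1) * card A * (\<Sum>i\<in>{..<n} - A. ?X (insert i A) - ?X A)"
    unfolding xA_def msum_def by (rule alg_sum)
  also have "\<dots> = - alpha le l n (card A) * ?X A
      + (l / real n * card A + l / real (n - 1) * card A * (\<Sum>i\<in>{..<n} - A. ?X (insert i A)))"
  proof -
    have c: "card ({..<n} - A) = n - card A" using A by (simp add: card_Diff_subset finite_subset)
    have le: "card A \<le> n" using A by (metis card_lessThan card_mono finite_lessThan)
    have e: "(\<Sum>i\<in>{..<n} - A. ?X (insert i A) - ?X A) = (\<Sum>i\<in>{..<n} - A. ?X (insert i A)) - (real n - card A) * ?X A"
      using le by (simp add: sum_subtractf c of_nat_diff)
    have r: "\<And>le a b k X S m :: real. -le*X + a*k*(1 - X) + b*k*(S - m*X) = -(le + a*k + b*k*m)*X + (a*k + b*k*S)"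
      by (simp add: algebra_simps)
    show ?thesis unfolding e msum_one[OF S0] alpha_def by (rule r)
  qed
  finally have eq: "(\<Sum>U\<in>Pow {..<n}. ?P U * (- le * hit A U + l / real n * card A * (1 - hit A U)
     + l / real (n - 1) * card A * (\<Sum>i\<in>{..<n} - A. hit (insert i A) U - hit A U))) = - alpha le l n (card A) * ?X A
      + (l / real n * card A + l / real (n - 1) * card A * (\<Sum>i\<in>{..<n} - A. ?X (insert i A)))" .
  show ?thesis using d unfolding eq .
qed


lemma alpha_pos:
  assumes "le > 0" "l > 0" "k \<le> n"
  shows "alpha le l n k > 0"
proof -
  have a: "l / real n * k \<ge> 0" using assms by simp
  have b: "l / real (n - 1) * k * (real n - k) \<ge> 0" using assms by simp
  show ?thesis unfolding alpha_def by (rule add_pos_nonneg[OF add_pos_nonneg[OF assms(1) a] b])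
qed

lemma xA_step:
  assumes le: "le > 0" and l: "l > 0" and A: "A \<subseteq> {..<n}" and S0: "S0 \<subseteq> {..<n}"
    and IH: "\<And>i. i \<in> {..<n} - A \<Longrightarrow> (xA le l n S0 (insert i A) \<longlongrightarrow> L) at_top"
  shows "(xA le l n S0 A \<longlongrightarrow> (l / real n * card A + l / real (n - 1) * card A * (real (n - card A) * L))
            / alpha le l n (card A)) at_top"
proof -
  have kn: "card A \<le> n" using A by (metis card_lessThan card_mono finite_lessThan)
  have c: "card ({..<n} - A) = n - card A" using A by (simp add: card_Diff_subset finite_subset)
  have g: "((\<lambda>t. l / real n * card A + l / real (n - 1) * card A * (\<Sum>i\<in>{..<n} - A. xA le l n S0 (insert i A) t))
       \<longlongrightarrow> l / real n * card A + l / real (n - 1) * card A * (\<Sum>i\<in>{..<n} - A. L)) at_top"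
    by (intro tendsto_intros IH)
  have "(xA le l n S0 A \<longlongrightarrow> (l / real n * card A + l / real (n - 1) * card A * (\<Sum>i\<in>{..<n} - A. L))
            / alpha le l n (card A)) at_top"
    by (rule ode_lim[OF alpha_pos[OF le l kn] xA_deriv[OF A S0] g])
  then show ?thesis using c by simp
qed

fun vv :: "real \<Rightarrow> real \<Rightarrow> nat \<Rightarrow> nat \<Rightarrow> real" where
  "vv le l n 0 = l / (le + l)"
| "vv le l n (Suc m) = (l / real n * real (n - Suc m)
      + l / real (n - 1) * real (n - Suc m) * (real (Suc m) * vv le l n m)) / alpha le l n (n - Suc m)"

lemma xA_lim:
  assumes le: "le > 0" and l: "l > 0" and S0: "S0 \<subseteq> {..<n}"
  shows "m < n \<Longrightarrow> A \<subseteq> {..<n} \<Longrightarrow> card A = n - m \<Longrightarrow> (xA le l n S0 A \<longlongrightarrow> vv le l n m) at_top"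
proof (induction m arbitrary: A)
  case 0
  have "A = {..<n}" using 0 by (intro card_subset_eq) auto
  then have e: "{..<n} - A = {}" by simp
  have "(xA le l n S0 A \<longlongrightarrow> (l / real n * card A + l / real (n - 1) * card A * (real (n - card A) * 0))
            / alpha le l n (card A)) at_top"
    by (rule xA_step[OF le l 0(2) S0]) (simp add: e)
  moreover have "(l / real n * card A + l / real (n - 1) * card A * (real (n - card A) * 0))
            / alpha le l n (card A) = l / (le + l)"
    using 0 by (simp add: alpha_def)
  ultimately show ?case by simp
next
  case (Suc m)
  have "(xA le l n S0 A \<longlongrightarrow> (l / real n * card A + l / real (n - 1) * card A * (real (n - card A) * vv le l n m))
            / alpha le l n (card A)) at_top"
  proof (rule xA_step[OF le l Suc(3) S0])
    fix i assume i: "i \<in> {..<n} - A"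
    have "finite A" using Suc(3) finite_subset by blast
    then have "card (insert i A) = n - m" using i Suc(4) Suc(2) by simp
    then show "(xA le l n S0 (insert i A) \<longlongrightarrow> vv le l n m) at_top"
      using Suc i by auto
  qed
  moreover have "n - card A = Suc m" using Suc by simp
  ultimately show ?case using Suc by simp
qed


definition Vn :: "real \<Rightarrow> real \<Rightarrow> nat \<Rightarrow> nat \<Rightarrow> real" where
  "Vn le l n k = vv le l n (n - k)"

definition rr :: "real \<Rightarrow> real \<Rightarrow> nat \<Rightarrow> nat \<Rightarrow> real" where
  "rr le l n k = (l / real n * k) / alpha le l n k"

definition qq :: "real \<Rightarrow> real \<Rightarrow> nat \<Rightarrow> nat \<Rightarrow> real" where
  "qq le l n k = (l / real (n - 1) * k * (real n - k)) / alpha le l n k"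

definition pp :: "real \<Rightarrow> real \<Rightarrow> nat \<Rightarrow> nat \<Rightarrow> real" where
  "pp le l n k = (\<Prod>j\<in>{1..<k}. qq le l n j)"

lemma V_rec:
  assumes "k < n"
  shows "Vn le l n k = rr le l n k + qq le l n k * Vn le l n (Suc k)"
proof -
  obtain m where m: "n - k = Suc m" using assms by (metis Suc_diff_Suc)
  have m2: "n - Suc k = m" using m by simp
  have nk: "n - Suc m = k" using m assms by simp
  have "real (Suc m) = real n - real k" using m assms by (simp add: of_nat_diff[symmetric])
  then show ?thesis
    unfolding Vn_def m m2 rr_def qq_def by (simp add: nk add_divide_distrib)
qed

lemma V_n: "Vn le l n n = l / (le + l)"
  by (simp add: Vn_def)

lemma rr_n: "n > 0 \<Longrightarrow> rr le l n n = l / (le + l)"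
  by (simp add: rr_def alpha_def)

lemma pp_Suc: "k \<ge> 1 \<Longrightarrow> pp le l n (Suc k) = pp le l n k * qq le l n k"
  unfolding pp_def by (simp add: prod.atLeastLessThan_Suc)

lemma V_sum_aux:
  assumes "1 \<le> k" "k \<le> n"
  shows "Vn le l n 1 = (\<Sum>m\<in>{1..<k}. rr le l n m * pp le l n m) + pp le l n k * Vn le l n k"
  using assms
proof (induction k rule: dec_induct)
  case base
  then show ?case by (simp add: pp_def)
next
  case (step k)
  have "pp le l n k * Vn le l n k = rr le l n k * pp le l n k + pp le l n (Suc k) * Vn le l n (Suc k)"
    using step by (simp add: V_rec pp_Suc algebra_simps)
  then show ?case using step by (simp add: sum.atLeastLessThan_Suc)
qed

lemma V_sum:
  assumes "n \<ge> 1"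
  shows "Vn le l n 1 = (\<Sum>m\<in>{1..n}. rr le l n m * pp le l n m)"
proof -
  have "Vn le l n 1 = (\<Sum>m\<in>{1..<n}. rr le l n m * pp le l n m) + pp le l n n * Vn le l n n"
    using V_sum_aux[OF assms order.refl] .
  also have "pp le l n n * Vn le l n n = rr le l n n * pp le l n n"
    using assms by (simp add: V_n rr_n)
  finally show ?thesis using assms by (simp add: atLeastLessThanSuc_atLeastAtMost[symmetric] sum.atLeastLessThan_Suc)
qed


lemma qup_key:
  fixes r J N :: real
  assumes r: "r > 0" and J: "J \<ge> 1" and N: "N \<ge> J + 1"
  shows "(J*(N-J)/(N-1)) * (1 + r/J) * (1 + (1/(2*(1+r)))/(N-J)) \<le> r + J/N + J*(N-J)/(N-1)"
proof -
  define c where "c = 1/(2*(1+r))"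
  have c0: "c > 0" using r by (simp add: c_def)
  have N1: "N - 1 > 0" "N > 0" "N - J > 0" using J N by auto
  have e: "(J*(N-J)/(N-1)) * (1 + r/J) * (1 + c/(N-J)) = J*(N-J)/(N-1) + (r*(N-J) + c*J + r*c)/(N-1)"
  proof -
    have a: "(J*(N-J)/(N-1)) * (1 + r/J) = (N-J)*(J+r)/(N-1)" using J N1 by (simp add: field_simps)
    have b1: "(N-J)*(1 + c/(N-J)) = N-J+c" using N1 by (simp add: field_simps)
    have b: "(N-J)*(J+r)/(N-1) * (1 + c/(N-J)) = (J+r)*(N-J+c)/(N-1)"
      by (simp only: b1[symmetric]) (simp add: ac_simps)
    show ?thesis unfolding a b add_divide_distrib[symmetric] by (rule arg_cong[where f="\<lambda>x. x/(N-1)"]) (simp add: algebra_simps)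
  qed
  have k1: "c*J + r*c \<le> c*J*(1+r)" using c0 J r by (simp add: algebra_simps)
  have k2: "c*J*(1+r) = J/2" using r by (simp add: c_def field_simps)
  have k3: "J/2 \<le> J*(N-1)/N" using N1 J N by (simp add: field_simps)
  have k4: "0 \<le> r*(J-1)" using r J by simp
  have k5: "r*(N-J) + r*(J-1) = r*(N-1)" by (simp add: algebra_simps)
  have "r*(N-J) + c*J + r*c \<le> r*(N-1) + J*(N-1)/N" using k1 k2 k3 k4 k5 by linarith
  then have "(r*(N-J) + c*J + r*c)/(N-1) \<le> (r*(N-1) + J*(N-1)/N)/(N-1)"
    using N1 by (simp add: divide_right_mono)
  also have "\<dots> = r + J/N" using N1 by (simp add: field_simps)
  finally show ?thesis using e unfolding c_def by simp
qed

lemma qlow_key: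
  fixes r J N :: real
  assumes r: "r > 0" and J: "J \<ge> 1" and N: "2*J \<le> N"
  shows "r + J/N + J*(N-J)/(N-1) \<le> (J*(N-J)/(N-1)) * (1 + r/J) * (1 + (2*r+2)/N)"
proof -
  define B where "B = J*(N-J)/(N-1)"
  define D where "D = 2*r+2"
  have N1: "N - 1 > 0" "N > 0" "N - J > 0" using J N by auto
  have B0: "B \<ge> 0" using N1 J by (simp add: B_def)
  have h1a: "B*(r/J) = r*(N-J)/(N-1)" using J N1 by (simp add: B_def field_simps)
  have h1: "B*(1+r/J) = B + r*(N-J)/(N-1)" using h1a by (simp add: algebra_simps)
  have h2: "B*(1+r/J)*(1+D/N) = B*(1+r/J) + B*(1+r/J)*(D/N)" by (simp only: distrib_left mult_1_right)
  have h3: "B*(1+r/J)*(D/N) \<ge> B*(D/N)"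
  proof -
    have "1 \<le> 1 + r/J" using r J by simp
    then have "B*1 \<le> B*(1+r/J)" using B0 by (rule mult_left_mono)
    moreover have "D/N \<ge> 0" using r N1 by (simp add: D_def)
    ultimately show ?thesis using mult_right_mono by fastforce
  qed
  have h4: "B*(D/N) \<ge> J*(r+1)/(N-1)"
  proof -
    have "J*(r+1)/(N-1) = (J*(N/2)*D)/((N-1)*N)" using N1 by (simp add: D_def field_simps)
    also have "\<dots> \<le> (J*(N-J)*D)/((N-1)*N)"
      using N1 J N r by (intro divide_right_mono mult_right_mono mult_left_mono) (auto simp: D_def)
    also have "\<dots> = B*(D/N)" by (simp add: B_def)
    finally show ?thesis .
  qed
  have h5: "r = r*(N-J)/(N-1) + r*(J-1)/(N-1)"
  proof -
    have e: "r*(N-J) + r*(J-1) = r*(N-1)" by (simp add: algebra_simps)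
    have "r*(N-J)/(N-1) + r*(J-1)/(N-1) = (r*(N-J) + r*(J-1))/(N-1)" by (rule add_divide_distrib[symmetric])
    also have "\<dots> = r" unfolding e using N1 by simp
    finally show ?thesis by simp
  qed
  have h6: "r*(J-1)/(N-1) + J/N \<le> J*(r+1)/(N-1)"
  proof -
    have "J/N \<le> J/(N-1)" using N1 J by (intro divide_left_mono) auto
    then have "r*(J-1)/(N-1) + J/N \<le> r*(J-1)/(N-1) + J/(N-1)" by (rule add_left_mono)
    also have "r*(J-1)/(N-1) + J/(N-1) = (r*(J-1) + J)/(N-1)" by (simp add: add_divide_distrib)
    also have "(r*(J-1) + J)/(N-1) \<le> J*(r+1)/(N-1)"
      using N1 r by (intro divide_right_mono) (auto simp: algebra_simps)
    finally show ?thesis .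
  qed
  have "r + J/N + B \<le> B*(1+r/J)*(1+D/N)"
    using h1 h2 h3 h4 h5 h6 by linarith
  then show ?thesis by (simp add: B_def D_def)
qed

lemma rup_key:
  fixes r K N :: real
  assumes r: "r > 0" and K: "K \<ge> 1" and N: "K \<le> N" "N \<ge> 2"
  shows "(K/N) / (r + K/N + K*(N-K)/(N-1)) \<le> 1/(N-K+1)"
proof -
  have N1: "N - 1 > 0" "N > 0" "N - K + 1 > 0" using K N by auto
  have a: "K*(N-K)/N \<le> K*(N-K)/(N-1)" using N1 K N by (intro divide_left_mono) auto
  have b: "(K/N)*(N-K+1) = K/N + K*(N-K)/N" using N1 by (simp add: field_simps)
  have pos: "r + K/N + K*(N-K)/(N-1) > 0" using r N1 K N by (intro add_pos_nonneg) auto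
  have "(K/N)*(N-K+1) \<le> r + K/N + K*(N-K)/(N-1)" using a b r by linarith
  then have "K/N \<le> (r + K/N + K*(N-K)/(N-1))/(N-K+1)" using N1 by (simp add: pos_le_divide_eq)
  then have "K/N \<le> 1/(N-K+1) * (r + K/N + K*(N-K)/(N-1))" by simp
  then show ?thesis by (simp only: pos_divide_le_eq[OF pos])
qed

lemma rlow_key:
  fixes r K N :: real
  assumes r: "r > 0" and K: "K \<ge> 1" and N: "K \<le> N" "N \<ge> 2"
  shows "1/(N*(r+2)) \<le> (K/N) / (r + K/N + K*(N-K)/(N-1))"
proof -
  have N1: "N - 1 > 0" "N > 0" using K N by auto
  have pos: "r + K/N + K*(N-K)/(N-1) > 0" using r N1 K N by (intro add_pos_nonneg) auto
  have a: "r \<le> r*K" using r K by simp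
  have b: "K/N \<le> K" using K N1 N by (simp add: divide_le_eq)
  have c: "K*(N-K)/(N-1) \<le> K" using K N1 N by (simp add: divide_le_eq mult_left_mono)
  have "r + K/N + K*(N-K)/(N-1) \<le> (r+2)*K" using a b c by (simp add: algebra_simps)
  then have "(K/N)/((r+2)*K) \<le> (K/N) / (r + K/N + K*(N-K)/(N-1))"
    using pos K N1 by (intro divide_left_mono) auto
  moreover have "(K/N)/((r+2)*K) = 1/(N*(r+2))"
  proof -
    have K0: "K \<noteq> 0" using K by auto
    have "(K/N)/((r+2)*K) = K/((N*(r+2))*K)" by (simp only: divide_divide_eq_left mult.assoc)
    also have "\<dots> = 1/(N*(r+2))" using K0 by (rule nonzero_divide_mult_cancel_right)
    finally show ?thesis .
  qed
  ultimately show ?thesis by simp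
qed

definition Af :: "real \<Rightarrow> real \<Rightarrow> real \<Rightarrow> real" where
  "Af r N K = r + K/N + K*(N-K)/(N-1)"

lemma alpha_norm:
  assumes "l > 0" "n \<ge> 1"
  shows "alpha le l n k = l * Af (le/l) (real n) (real k)"
  using assms by (simp add: alpha_def Af_def of_nat_diff field_simps)

lemma rr_norm:
  assumes "l > 0" "n \<ge> 1"
  shows "rr le l n k = (real k / real n) / Af (le/l) (real n) (real k)"
  using assms by (simp add: rr_def alpha_norm)

lemma qq_norm:
  assumes "l > 0" "n \<ge> 1"
  shows "qq le l n k = (real k * (real n - real k) / (real n - 1)) / Af (le/l) (real n) (real k)"
  using assms by (simp add: qq_def alpha_norm of_nat_diff)


lemma bern:
  fixes y b :: real
  assumes "0 \<le> b" "b \<le> 1" "y \<ge> 0"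
  shows "y powr b \<le> b * y + (1 - b)"
proof (cases "y = 0")
  case True
  then show ?thesis using assms by simp
next
  case False
  then have y: "y > 0" using assms by simp
  show ?thesis
  proof (cases "b = 1")
    case True then show ?thesis using y by simp
  next
    case False
    then have "y powr b * 1 powr (1 - b) \<le> b * y + (1 - b) * 1"
      using assms y by (intro Youngs_inequality_0) auto
    then show ?thesis by simp
  qed
qed

definition aexp :: "real \<Rightarrow> real" where
  "aexp r = (if r \<le> 1 then r else min ((1 + r)/2) (3/2))"

lemma aexp_pos: "r > 0 \<Longrightarrow> aexp r > 0"
  by (simp add: aexp_def)

lemma aexp_gt1: "r > 1 \<Longrightarrow> aexp r > 1"
  by (simp add: aexp_def)

lemma aexp_le1: "r \<le> 1 \<Longrightarrow> aexp r = r"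
  by (simp add: aexp_def)

lemma aexp_bound:
  fixes r x :: real
  assumes r: "r > 0" and x: "0 \<le> x" "x \<le> 1"
  shows "(1 + x) powr aexp r \<le> 1 + r * x"
proof (cases "r \<le> 1")
  case True
  then have "(1 + x) powr r \<le> r * (1 + x) + (1 - r)" using r x by (intro bern) auto
  then show ?thesis using True by (simp add: aexp_def algebra_simps)
next
  case False
  define a where "a = aexp r"
  have a: "a > 1" "a \<le> 3/2" "2*a - 1 \<le> r" using False by (auto simp: a_def aexp_def min_def field_simps)
  have e: "(1 + x) powr a = (1 + x) * (1 + x) powr (a - 1)"
  proof -
    have "(1 + x) powr a = (1 + x) powr (1 + (a - 1))" by simp
    also have "\<dots> = (1 + x) powr 1 * (1 + x) powr (a - 1)" by (rule powr_add)
    also have "(1 + x) powr 1 = 1 + x" using x by simp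
    finally show ?thesis .
  qed
  have "(1 + x) powr a = (1 + x) * (1 + x) powr (a - 1)" by (rule e)
  also have "\<dots> \<le> (1 + x) * ((a - 1) * (1 + x) + (1 - (a - 1)))"
    using x a by (intro mult_mono bern) auto
  also have "\<dots> = 1 + a*x + (a - 1) * (x * x)" by (simp add: algebra_simps)
  also have "\<dots> \<le> 1 + a*x + (a - 1) * x"
    using x a by (intro add_left_mono mult_left_mono) (auto simp: mult_le_cancel_right1 intro: mult_left_le_one_le)
  also have "\<dots> \<le> 1 + r * x"
  proof -
    have "a*x + (a - 1)*x = (2*a - 1)*x" by (simp add: algebra_simps)
    also have "\<dots> \<le> r*x" using a x by (intro mult_right_mono) auto
    finally show ?thesis by simp
  qed
  finally show ?thesis by (simp add: a_def)
qed

lemma powr_step_sum: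
  fixes b :: real and m :: nat
  assumes b: "0 < b" "b \<le> 1" and m: "m \<ge> 1"
  shows "b * real m powr (b - 1) \<le> real m powr b - real (m - 1) powr b"
proof -
  have m0: "real m > 0" using m by simp
  have e: "real (m - 1) = real m * ((real m - 1) / real m)" using m0 m by (simp add: of_nat_diff field_simps)
  have "real (m - 1) powr b = real m powr b * ((real m - 1) / real m) powr b"
    by (subst e) (rule powr_mult)
  also have "\<dots> \<le> real m powr b * (b * ((real m - 1) / real m) + (1 - b))"
    using b m m0 by (intro mult_left_mono bern) auto
  also have "\<dots> = real m powr b - b * (real m powr b / real m)"
    using m0 by (simp add: field_simps)
  also have "real m powr b / real m = real m powr (b - 1)"
    using m0 by (simp add: powr_diff)
  finally show ?thesis by simp
qed

lemma sum_powr_upper: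
  fixes b :: real
  assumes b: "0 < b" "b \<le> 1"
  shows "(\<Sum>i\<in>{1..n}. real i powr (b - 1)) \<le> real n powr b / b"
proof (induction n)
  case 0
  then show ?case by simp
next
  case (Suc n)
  have "(\<Sum>i\<in>{1..Suc n}. real i powr (b - 1)) = (\<Sum>i\<in>{1..n}. real i powr (b - 1)) + real (Suc n) powr (b - 1)"
    by simp
  also have "\<dots> \<le> real n powr b / b + real (Suc n) powr (b - 1)"
    using Suc by simp
  also have "\<dots> \<le> real (Suc n) powr b / b"
  proof -
    have "b * real (Suc n) powr (b - 1) \<le> real (Suc n) powr b - real (Suc n - 1) powr b"
      using b by (intro powr_step_sum) auto
    then have "real (Suc n) powr (b - 1) \<le> (real (Suc n) powr b - real n powr b) / b"
      using b by (simp add: field_simps)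
    then show ?thesis by (simp add: diff_divide_distrib)
  qed
  finally show ?case .
qed

lemma harm_upper:
  "n \<ge> 1 \<Longrightarrow> (\<Sum>i\<in>{1..n}. 1 / real i) \<le> 1 + ln (real n)"
proof (induction n rule: dec_induct)
  case base
  then show ?case by simp
next
  case (step n)
  have "1 / real (Suc n) \<le> ln (real (Suc n)) - ln (real n)"
  proof -
    have n0: "real n > 0" using step by simp
    have "ln (real n / real (Suc n)) \<le> real n / real (Suc n) - 1"
      using n0 by (intro ln_le_minus_one) simp
    also have "\<dots> = - (1 / real (Suc n))" by (simp add: field_simps)
    finally show ?thesis using n0 by (simp add: ln_div)
  qed
  then show ?case using step by simp
qed

lemma exp_step:
  fixes r :: real and k :: nat
  assumes r: "r \<ge> 0" and k: "k \<ge> 1"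
  shows "real k powr r * exp (r * (1 - 1 / real k)) * (1 + r / real k)
       \<le> real (Suc k) powr r * exp (r * (1 - 1 / real (Suc k)))"
proof -
  have k0: "real k > 0" using k by simp
  have l: "1 / real (Suc k) \<le> ln (real (Suc k) / real k)"
  proof -
    have "ln (real k / real (Suc k)) \<le> real k / real (Suc k) - 1"
      using k0 by (intro ln_le_minus_one) simp
    also have "\<dots> = - (1 / real (Suc k))" by (simp add: field_simps)
    finally show ?thesis using k0 by (simp add: ln_div)
  qed
  have "1 + r / real k \<le> exp (r / real k)" by (rule exp_ge_add_one_self)
  also have "exp (r / real k) = exp (r / real (Suc k)) * exp (r * (1 / real k - 1 / real (Suc k)))"
  proof -
    have h: "r / real k = r / real (Suc k) + r * (1 / real k - 1 / real (Suc k))"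
      by (simp add: right_diff_distrib)
    show ?thesis by (subst h) (simp add: exp_add)
  qed
  also have "exp (r / real (Suc k)) \<le> (real (Suc k) / real k) powr r"
  proof -
    have "r / real (Suc k) \<le> r * ln (real (Suc k) / real k)"
      using l r by (metis mult_left_mono times_divide_eq_right mult_1_right)
    then have "exp (r / real (Suc k)) \<le> exp (r * ln (real (Suc k) / real k))" by simp
    also have "\<dots> = (real (Suc k) / real k) powr r"
      using k0 by (simp add: powr_def mult.commute)
    finally show ?thesis .
  qed
  finally have "1 + r / real k \<le> (real (Suc k) / real k) powr r * exp (r * (1 / real k - 1 / real (Suc k)))"
    by (simp add: mult_right_mono)
  then have "real k powr r * exp (r * (1 - 1 / real k)) * (1 + r / real k)
      \<le> real k powr r * exp (r * (1 - 1 / real k)) * ((real (Suc k) / real k) powr r * exp (r * (1 / real k - 1 / real (Suc k))))"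
    by (intro mult_left_mono) auto
  also have "\<dots> = (real k powr r * (real (Suc k) / real k) powr r) * (exp (r * (1 - 1 / real k)) * exp (r * (1 / real k - 1 / real (Suc k))))"
    by (simp add: ac_simps)
  also have "real k powr r * (real (Suc k) / real k) powr r = real (Suc k) powr r"
    using k0 by (simp add: powr_divide)
  also have "exp (r * (1 - 1 / real k)) * exp (r * (1 / real k - 1 / real (Suc k))) = exp (r * (1 - 1 / real (Suc k)))"
    by (simp add: exp_add[symmetric] algebra_simps)
  finally show ?thesis .
qed


lemma Af_pos:
  assumes "r > 0" "1 \<le> K" "K \<le> N" "N \<ge> 2"
  shows "Af r N K > 0"
  unfolding Af_def using assms by (intro add_pos_nonneg) auto

lemma rr_up:
  assumes le: "le > 0" and l: "l > 0" and n: "n \<ge> 2" and k: "1 \<le> k" "k \<le> n"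
  shows "rr le l n k \<le> 1 / (real n - real k + 1)"
proof -
  have n1: "n \<ge> 1" using n by simp
  show ?thesis unfolding rr_norm[OF l n1] using n k rup_key[of "le/l" "real k" "real n"] le l
    by (simp add: Af_def)
qed

lemma rr_low:
  assumes le: "le > 0" and l: "l > 0" and n: "n \<ge> 2" and k: "1 \<le> k" "k \<le> n"
  shows "1 / (real n * (le/l + 2)) \<le> rr le l n k"
proof -
  have n1: "n \<ge> 1" using n by simp
  show ?thesis unfolding rr_norm[OF l n1] using n k rlow_key[of "le/l" "real k" "real n"] le l
    by (simp add: Af_def)
qed

lemma qq_up:
  assumes le: "le > 0" and l: "l > 0" and j: "1 \<le> j" "j < n"
  shows "qq le l n j \<le> 1 / ((1 + (le/l) / real j) * (1 + (1/(2*(1+le/l))) / (real n - real j)))"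
proof -
  define r where "r = le/l"
  have r: "r > 0" using le l by (simp add: r_def)
  define J where "J = real j"
  define N where "N = real n"
  have J: "J \<ge> 1" "N \<ge> J + 1" "N \<ge> 2" using j by (auto simp: J_def N_def)
  define P where "P = (1 + r / J) * (1 + (1/(2*(1+r))) / (N - J))"
  have P: "P > 0" using r J unfolding P_def by (intro mult_pos_pos add_pos_pos) auto
  have A: "Af r N J > 0" using r J by (intro Af_pos) auto
  have key: "(J*(N-J)/(N-1)) * P \<le> Af r N J"
    using qup_key[OF r J(1) J(2)] unfolding P_def Af_def by (simp add: mult.assoc)
  have "(J*(N-J)/(N-1)) / Af r N J \<le> 1 / P"
  proof -
    have "J*(N-J)/(N-1) \<le> Af r N J / P" using key P by (simp add: pos_le_divide_eq)
    then have "J*(N-J)/(N-1) \<le> 1 / P * Af r N J" by simp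
    then show ?thesis by (simp only: pos_divide_le_eq[OF A])
  qed
  moreover have n1: "n \<ge> 1" using j by simp
  ultimately show ?thesis
    unfolding qq_norm[OF l n1] by (simp add: r_def J_def N_def P_def)
qed

lemma qq_low:
  assumes le: "le > 0" and l: "l > 0" and j: "1 \<le> j" "2 * j \<le> n"
  shows "1 / ((1 + (le/l) / real j) * (1 + (2*(le/l)+2) / real n)) \<le> qq le l n j"
proof -
  define r where "r = le/l"
  have r: "r > 0" using le l by (simp add: r_def)
  define J where "J = real j"
  define N where "N = real n"
  have J: "J \<ge> 1" "2*J \<le> N" using j by (auto simp: J_def N_def)
  define P where "P = (1 + r / J) * (1 + (2*r+2) / N)"
  have P: "P > 0" using r J unfolding P_def by (intro mult_pos_pos add_pos_pos) auto
  have A: "Af r N J > 0" using r J by (intro Af_pos) auto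
  have key: "Af r N J \<le> (J*(N-J)/(N-1)) * P"
    using qlow_key[OF r J(1) J(2)] unfolding P_def Af_def by (simp add: mult.assoc)
  have "1 / P \<le> (J*(N-J)/(N-1)) / Af r N J"
  proof -
    have "Af r N J / P \<le> J*(N-J)/(N-1)" using key P by (simp add: pos_divide_le_eq)
    then have "1 / P * Af r N J \<le> J*(N-J)/(N-1)" by simp
    then show ?thesis by (simp only: pos_le_divide_eq[OF A])
  qed
  moreover have n1: "n \<ge> 1" using j by simp
  ultimately show ?thesis
    unfolding qq_norm[OF l n1] by (simp add: r_def J_def N_def P_def)
qed

lemma qq_pos:
  assumes le: "le > 0" and l: "l > 0" and j: "1 \<le> j" "j < n"
  shows "qq le l n j > 0"
proof -
  have a: "Af (le/l) (real n) (real j) > 0" using le l j by (intro Af_pos) auto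
  have b: "real j * (real n - real j) / (real n - 1) > 0" using j by auto
  have n1: "n \<ge> 1" using j by simp
  show ?thesis unfolding qq_norm[OF l n1] using divide_pos_pos[OF b a] .
qed

lemma pp_pos:
  assumes le: "le > 0" and l: "l > 0" and k: "k \<le> n"
  shows "pp le l n k > 0"
  unfolding pp_def using k by (intro prod_pos qq_pos[OF le l]) auto


lemma powr_stepA:
  fixes a r :: real and k :: nat
  assumes k: "k \<ge> 1" and h: "(1 + 1 / real k) powr a \<le> 1 + r / real k"
  shows "real k powr (- a) \<le> real (Suc k) powr (- a) * (1 + r / real k)"
proof -
  have k0: "real k > 0" using k by simp
  have e: "1 + 1 / real k = real (Suc k) / real k" using k0 by (simp add: field_simps)
  have "real (Suc k) powr (- a) * (1 + 1 / real k) powr a = real k powr (- a)"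
    unfolding e powr_divide powr_minus_divide using k0 by (simp add: field_simps)
  moreover have "real (Suc k) powr (- a) * (1 + 1 / real k) powr a \<le> real (Suc k) powr (- a) * (1 + r / real k)"
    using h by (intro mult_left_mono) auto
  ultimately show ?thesis by simp
qed

lemma powr_stepB:
  fixes c :: real and m n :: nat
  assumes m: "m \<ge> 1" and n: "n > 0" and c: "0 < c" "c \<le> 1"
  shows "((real m + 1) / real n) powr c \<le> (real m / real n) powr c * (1 + c / real m)"
proof -
  have m0: "real m > 0" using m by simp
  have e: "(real m + 1) / real n = (real m / real n) * (1 + 1 / real m)" using m0 n by (simp add: field_simps)
  have "((real m + 1) / real n) powr c = (real m / real n) powr c * (1 + 1 / real m) powr c"
    unfolding e by (rule powr_mult)
  also have "\<dots> \<le> (real m / real n) powr c * (c * (1 + 1 / real m) + (1 - c))"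
    using c m0 by (intro mult_left_mono bern) auto
  also have "c * (1 + 1 / real m) + (1 - c) = 1 + c / real m" by (simp add: algebra_simps)
  finally show ?thesis .
qed

lemma pp_one: "pp le l n 1 = 1" by (simp add: pp_def)
lemma pp_one': "pp le l n (Suc 0) = 1" by (simp add: pp_def)

lemma pp_up:
  assumes le: "le > 0" and l: "l > 0" and n: "n \<ge> 2"
  shows "1 \<le> k \<Longrightarrow> k \<le> n \<Longrightarrow> pp le l n k \<le> real k powr (- aexp (le/l)) * ((real n - real k + 1) / real n) powr (1/(2*(1+le/l)))"
proof (induction k rule: dec_induct)
  case base
  then show ?case using n by (simp add: pp_one')
next
  case (step k)
  define r where "r = le/l"
  have r: "r > 0" using le l by (simp add: r_def)
  define a where "a = aexp r"
  define c where "c = 1/(2*(1+r))"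
  have c: "0 < c" "c \<le> 1" using r by (auto simp: c_def field_simps)
  have kn: "k < n" using step by simp
  define P1 where "P1 = 1 + r / real k"
  define P2 where "P2 = 1 + c / (real n - real k)"
  have P1: "P1 > 0" using r step by (simp add: P1_def add_pos_nonneg)
  have P2: "P2 > 0" using c kn by (simp add: P2_def add_pos_nonneg)
  define X where "X = real k powr (- a)"
  define Y where "Y = ((real n - real k + 1) / real n) powr c"
  define X' where "X' = real (Suc k) powr (- a)"
  define Y' where "Y' = ((real n - real (Suc k) + 1) / real n) powr c"
  have ih: "pp le l n k \<le> X * Y" using step kn by (simp add: X_def Y_def a_def c_def r_def)
  have q: "qq le l n k \<le> 1 / (P1 * P2)"
    using qq_up[OF le l step(1) kn] by (simp add: P1_def P2_def r_def c_def)
  have q0: "qq le l n k \<ge> 0" using qq_pos[OF le l step(1) kn] by simp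
  have X: "X \<le> X' * P1"
    unfolding X_def X'_def P1_def
    by (rule powr_stepA[OF step(1)]) (use aexp_bound[OF r, of "1 / real k"] step(1) in \<open>simp add: a_def\<close>)
  have Y: "Y \<le> Y' * P2"
  proof -
    have m: "n - k \<ge> 1" using kn by simp
    have e1: "real n - real k + 1 = real (n - k) + 1" using kn by (simp add: of_nat_diff)
    have e2: "real n - real (Suc k) + 1 = real (n - k)" using kn by (simp add: of_nat_diff)
    have e3: "real n - real k = real (n - k)" using kn by (simp add: of_nat_diff)
    show ?thesis unfolding Y_def Y'_def P2_def e1 e2 e3
      by (rule powr_stepB[OF m _ c]) (use n in simp)
  qed
  have X0: "X \<ge> 0" "Y \<ge> 0" by (simp_all add: X_def Y_def)
  have "pp le l n (Suc k) = pp le l n k * qq le l n k" using step by (simp add: pp_Suc)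
  also have "\<dots> \<le> (X * Y) * (1 / (P1 * P2))"
    using ih q q0 pp_pos[OF le l, of k n] kn by (intro mult_mono) auto
  also have "\<dots> = (X / P1) * (Y / P2)" by simp
  also have "\<dots> \<le> X' * Y'"
  proof (intro mult_mono)
    show "X / P1 \<le> X'" using X P1 by (simp add: pos_divide_le_eq)
    show "Y / P2 \<le> Y'" using Y P2 by (simp add: pos_divide_le_eq)
  qed (auto simp: X'_def P1 X0 intro: divide_nonneg_pos P2)
  finally show ?case by (simp add: X'_def Y'_def a_def c_def r_def)
qed

definition Gf :: "real \<Rightarrow> nat \<Rightarrow> nat \<Rightarrow> real" where
  "Gf r n k = real k powr r * exp (r * (1 - 1 / real k)) * (1 + (2*r+2) / real n) ^ (k - 1)"

lemma pp_low_aux: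
  assumes le: "le > 0" and l: "l > 0" and n: "n \<ge> 1"
  shows "1 \<le> k \<Longrightarrow> 2 * (k - 1) \<le> n \<Longrightarrow> 1 \<le> pp le l n k * Gf (le/l) n k"
proof (induction k rule: dec_induct)
  case base
  then show ?case by (simp add: pp_one' Gf_def)
next
  case (step k)
  define r where "r = le/l"
  have r: "r > 0" using le l by (simp add: r_def)
  define D where "D = 2*r+2"
  have kn: "2 * k \<le> n" "k < n" using step by auto
  define P1 where "P1 = 1 + r / real k"
  define P2 where "P2 = 1 + D / real n"
  have P1: "P1 > 0" using r step by (simp add: P1_def add_pos_nonneg)
  have P2: "P2 > 0" using r n by (simp add: P2_def D_def add_pos_nonneg)
  have ih: "1 \<le> pp le l n k * Gf r n k" using step by (simp add: r_def)
  have q: "1 / (P1 * P2) \<le> qq le l n k"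
    using qq_low[OF le l step(1) kn(1)] by (simp add: P1_def P2_def r_def D_def)
  then have q1: "1 \<le> qq le l n k * (P1 * P2)" using P1 P2 by (simp add: pos_divide_le_eq)
  have G: "Gf r n k * (P1 * P2) \<le> Gf r n (Suc k)"
  proof -
    have "Gf r n k * (P1 * P2) = (real k powr r * exp (r * (1 - 1 / real k)) * P1) * (P2 ^ (k - 1) * P2)"
      by (simp add: Gf_def P2_def D_def ac_simps)
    also have "P2 ^ (k - 1) * P2 = P2 ^ (Suc k - 1)" using step by (cases k) auto
    also have "real k powr r * exp (r * (1 - 1 / real k)) * P1 \<le> real (Suc k) powr r * exp (r * (1 - 1 / real (Suc k)))"
      unfolding P1_def using r step by (intro exp_step) auto
    also have "real (Suc k) powr r * exp (r * (1 - 1 / real (Suc k))) * P2 ^ (Suc k - 1) = Gf r n (Suc k)"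
      by (simp add: Gf_def P2_def D_def)
    finally show ?thesis using P2 by (simp add: mult_right_mono)
  qed
  have pp0: "pp le l n k \<ge> 0" using pp_pos[OF le l, of k n] kn by simp
  have q0: "qq le l n k \<ge> 0" using qq_pos[OF le l step(1) kn(2)] by simp
  have "1 \<le> pp le l n k * Gf r n k" by (rule ih)
  also have "\<dots> \<le> pp le l n k * (qq le l n k * (P1 * P2)) * Gf r n k"
  proof -
    have "Gf r n k \<ge> 0" using r by (simp add: Gf_def D_def)
    then have "pp le l n k * Gf r n k * 1 \<le> pp le l n k * Gf r n k * (qq le l n k * (P1 * P2))"
      using pp0 q1 by (intro mult_left_mono) auto
    then show ?thesis by (simp add: ac_simps)
  qed
  also have "\<dots> = pp le l n k * qq le l n k * (Gf r n k * (P1 * P2))" by (simp add: ac_simps)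
  also have "\<dots> \<le> pp le l n k * qq le l n k * Gf r n (Suc k)"
    using G pp0 q0 by (intro mult_left_mono) auto
  also have "\<dots> = pp le l n (Suc k) * Gf r n (Suc k)" using step by (simp add: pp_Suc)
  finally show ?case by (simp add: r_def)
qed

lemma pp_low:
  assumes le: "le > 0" and l: "l > 0" and n: "n \<ge> 1" and k: "1 \<le> k" "2 * (k - 1) \<le> n"
  shows "real k powr (- (le/l)) * exp (- (le/l) - (2*(le/l)+2)) \<le> pp le l n k"
proof -
  define r where "r = le/l"
  have r: "r > 0" using le l by (simp add: r_def)
  define D where "D = 2*r+2"
  have h: "1 \<le> pp le l n k * Gf r n k" using pp_low_aux[OF le l n k] by (simp add: r_def)
  have G0: "Gf r n k > 0" using r k by (simp add: Gf_def add_pos_nonneg)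
  have Gb: "Gf r n k \<le> real k powr r * exp r * exp D"
  proof -
    have "exp (r * (1 - 1 / real k)) \<le> exp r" using r k by simp
    moreover have "(1 + D / real n) ^ (k - 1) \<le> exp D"
    proof -
      have "(1 + D / real n) ^ (k - 1) \<le> (1 + D / real n) ^ n"
        using k r by (intro power_increasing) (auto simp: D_def)
      also have "\<dots> \<le> exp D" using n r by (intro exp_ge_one_plus_x_over_n_power_n) (auto simp: D_def)
      finally show ?thesis .
    qed
    moreover have "0 \<le> 1 + D / real n" using r by (simp add: D_def)
    ultimately show ?thesis unfolding Gf_def D_def[symmetric]
      by (intro mult_mono) auto
  qed
  have kn: "k \<le> n" using k n by linarith
  have pp0: "pp le l n k > 0" using pp_pos[OF le l kn] .
  have "1 \<le> pp le l n k * (real k powr r * exp r * exp D)"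
    using h Gb pp0 by (meson mult_left_mono less_imp_le order_trans)
  then have "1 / (real k powr r * exp r * exp D) \<le> pp le l n k"
    using k by (simp add: divide_le_eq mult.commute)
  moreover have "1 / (real k powr r * exp r * exp D) = real k powr (- r) * exp (- r - D)"
    by (simp add: powr_minus_divide exp_diff exp_minus field_simps)
  ultimately show ?thesis by (simp add: r_def D_def)
qed


lemma sum_reflect:
  "(\<Sum>m\<in>{1..n}. f (n + 1 - m)) = (\<Sum>i\<in>{1..(n::nat)}. (f i :: real))"
  apply (rule sum.reindex_bij_witness[where i="\<lambda>i. n + 1 - i" and j="\<lambda>m. n + 1 - m"])
  apply (simp_all only: atLeastAtMost_iff)
  apply presburger+
  done

lemma term_upper:
  fixes a c N x m :: real
  assumes a: "a > 0" and c: "0 < c" "c \<le> 1" and N: "N \<ge> 2" and m: "1 \<le> m" "m \<le> N"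
    and x: "x = N - m + 1"
  shows "(1 / x) * (m powr (- a) * (x / N) powr c)
       \<le> 2 / N * m powr (- a) + 2 powr a * N powr (- a - c) * x powr (c - 1)"
proof -
  have x1: "x \<ge> 1" using x m by simp
  have N0: "N > 0" using N by simp
  have t0: "2 powr a * N powr (- a - c) * x powr (c - 1) \<ge> 0" by simp
  have t1: "2 / N * m powr (- a) \<ge> 0" using N0 by simp
  show ?thesis
  proof (cases "2 * m \<le> N")
    case True
    have "1 / x \<le> 2 / N" using True x x1 N0 by (simp add: field_simps)
    moreover have "(x / N) powr c \<le> 1" using x m N0 c by (intro powr_le1) auto
    ultimately have "(1 / x) * (m powr (- a) * (x / N) powr c) \<le> 2 / N * (m powr (- a) * 1)"
      using x1 N0 by (intro mult_mono) auto
    then have h: "(1 / x) * (m powr (- a) * (x / N) powr c) \<le> 2 / N * m powr (- a)" by (simp only: mult_1_right)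
    show ?thesis using add_increasing2[OF t0 h] .
  next
    case False
    have "m powr (- a) \<le> (N / 2) powr (- a)" using False a N0 by (intro powr_mono2') auto
    also have "(N / 2) powr (- a) = 2 powr a * N powr (- a)"
      by (simp add: powr_divide powr_minus_divide)
    finally have hm: "m powr (- a) \<le> 2 powr a * N powr (- a)" .
    have e: "(1 / x) * (x / N) powr c = x powr (c - 1) * N powr (- c)"
      using x1 N0 by (simp add: powr_divide powr_diff powr_minus_divide)
    have "(1 / x) * (m powr (- a) * (x / N) powr c) = m powr (- a) * ((1 / x) * (x / N) powr c)"
      by simp
    also have "\<dots> = m powr (- a) * (x powr (c - 1) * N powr (- c))" by (simp only: e)
    also have "\<dots> \<le> (2 powr a * N powr (- a)) * (x powr (c - 1) * N powr (- c))"
      using hm by (intro mult_right_mono) auto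
    also have "\<dots> = 2 powr a * (N powr (- a) * N powr (- c)) * x powr (c - 1)" by simp
    also have "N powr (- a) * N powr (- c) = N powr (- a - c)" by (simp add: powr_add[symmetric])
    finally show ?thesis using t1 by simp
  qed
qed

lemma F_upper:
  assumes le: "le > 0" and l: "l > 0" and n: "n \<ge> 2"
  shows "Vn le l n 1 \<le> 2 / real n * (\<Sum>m\<in>{1..n}. real m powr (- aexp (le/l)))
           + 2 powr aexp (le/l) / (1/(2*(1+le/l))) * real n powr (- aexp (le/l))"
proof -
  define r where "r = le/l"
  have r: "r > 0" using le l by (simp add: r_def)
  define a where "a = aexp r"
  have a: "a > 0" using r by (simp add: a_def aexp_pos)
  define c where "c = 1/(2*(1+r))"
  have c: "0 < c" "c \<le> 1" using r by (auto simp: c_def field_simps)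
  define N where "N = real n"
  have N: "N \<ge> 2" using n by (simp add: N_def)
  have "Vn le l n 1 = (\<Sum>m\<in>{1..n}. rr le l n m * pp le l n m)" using n by (intro V_sum) simp
  also have "\<dots> \<le> (\<Sum>m\<in>{1..n}. 2 / N * real m powr (- a) + 2 powr a * N powr (- a - c) * (N - real m + 1) powr (c - 1))"
  proof (rule sum_mono)
    fix m assume m: "m \<in> {1..n}"
    have "rr le l n m * pp le l n m \<le> (1 / (N - real m + 1)) * (real m powr (- a) * ((N - real m + 1) / N) powr c)"
    proof (rule mult_mono)
      show "rr le l n m \<le> 1 / (N - real m + 1)" using rr_up[OF le l n] m by (simp add: N_def)
      show "pp le l n m \<le> real m powr (- a) * ((N - real m + 1) / N) powr c"
        using pp_up[OF le l n] m by (simp add: N_def a_def c_def r_def)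
      show "0 \<le> 1 / (N - real m + 1)" using m by (simp add: N_def)
      show "0 \<le> pp le l n m" using pp_pos[OF le l, of m n] m by simp
    qed
    also have "\<dots> \<le> 2 / N * real m powr (- a) + 2 powr a * N powr (- a - c) * (N - real m + 1) powr (c - 1)"
      using m by (intro term_upper[OF a c N]) (auto simp: N_def)
    finally show "rr le l n m * pp le l n m \<le> 2 / N * real m powr (- a) + 2 powr a * N powr (- a - c) * (N - real m + 1) powr (c - 1)" .
  qed
  also have "\<dots> = 2 / N * (\<Sum>m\<in>{1..n}. real m powr (- a)) + 2 powr a * N powr (- a - c) * (\<Sum>m\<in>{1..n}. (N - real m + 1) powr (c - 1))"
    by (simp add: sum.distrib sum_distrib_left)
  also have "(\<Sum>m\<in>{1..n}. (N - real m + 1) powr (c - 1)) = (\<Sum>i\<in>{1..n}. real i powr (c - 1))"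
  proof -
    have "(\<Sum>m\<in>{1..n}. (N - real m + 1) powr (c - 1)) = (\<Sum>m\<in>{1..n}. (\<lambda>i. real i powr (c - 1)) (n + 1 - m))"
      by (rule sum.cong) (auto simp: N_def of_nat_diff algebra_simps)
    then show ?thesis using sum_reflect[of "\<lambda>i. real i powr (c - 1)" n] by simp
  qed
  also have "(\<Sum>i\<in>{1..n}. real i powr (c - 1)) \<le> N powr c / c"
    unfolding N_def by (rule sum_powr_upper[OF c])
  finally have "Vn le l n 1 \<le> 2 / N * (\<Sum>m\<in>{1..n}. real m powr (- a)) + 2 powr a * N powr (- a - c) * (N powr c / c)"
    by (simp add: mult_left_mono)
  also have "2 powr a * N powr (- a - c) * (N powr c / c) = 2 powr a / c * N powr (- a)"
  proof -
    have "N powr (- a - c) * N powr c = N powr (- a)" by (simp add: powr_add[symmetric])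
    then show ?thesis by (simp add: field_simps)
  qed
  finally show ?thesis by (simp add: N_def a_def c_def r_def)
qed


lemma rr_pos:
  assumes le: "le > 0" and l: "l > 0" and n: "n \<ge> 2" and m: "1 \<le> m" "m \<le> n"
  shows "rr le l n m > 0"
proof -
  have "0 < 1 / (real n * (le/l + 2))" using le l n by (intro divide_pos_pos mult_pos_pos add_pos_pos) auto
  also have "\<dots> \<le> rr le l n m" using rr_low[OF le l n m] .
  finally show ?thesis .
qed

lemma F_lower_sum:
  assumes le: "le > 0" and l: "l > 0" and n: "n \<ge> 2"
  shows "exp (- (le/l) - (2*(le/l)+2)) / (real n * (le/l + 2)) * (\<Sum>m\<in>{1..n div 2}. real m powr (- (le/l)))
         \<le> Vn le l n 1"
proof -
  define r where "r = le/l"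
  define E where "E = exp (- r - (2*r+2))"
  have r: "r > 0" using le l by (simp add: r_def)
  have term_nonneg: "0 \<le> rr le l n m * pp le l n m" if "m \<in> {1..n}" for m
    using rr_pos[OF le l n, of m] pp_pos[OF le l, of m n] that by simp
  have "E / (real n * (r + 2)) * (\<Sum>m\<in>{1..n div 2}. real m powr (- r))
      = (\<Sum>m\<in>{1..n div 2}. 1 / (real n * (r + 2)) * (real m powr (- r) * E))"
    by (simp add: sum_distrib_left ac_simps)
  also have "\<dots> \<le> (\<Sum>m\<in>{1..n div 2}. rr le l n m * pp le l n m)"
  proof (rule sum_mono)
    fix m assume m: "m \<in> {1..n div 2}"
    have mn: "1 \<le> m" "m \<le> n" using m by auto
    show "1 / (real n * (r + 2)) * (real m powr (- r) * E) \<le> rr le l n m * pp le l n m"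
    proof (rule mult_mono)
      show "1 / (real n * (r + 2)) \<le> rr le l n m" using rr_low[OF le l n mn] by (simp add: r_def)
      show "real m powr (- r) * E \<le> pp le l n m"
      proof -
        have n1: "n \<ge> 1" using n by simp
        have "2 * (m - 1) \<le> n" using m by auto
        from pp_low[OF le l n1 mn(1) this] show ?thesis by (simp add: r_def E_def)
      qed
      show "0 \<le> rr le l n m" using rr_pos[OF le l n mn] by simp
      show "0 \<le> real m powr (- r) * E" by (simp add: E_def)
    qed
  qed
  also have "\<dots> \<le> (\<Sum>m\<in>{1..n}. rr le l n m * pp le l n m)"
    by (rule sum_mono2) (auto intro: term_nonneg)
  also have "\<dots> = Vn le l n 1" using n by (intro V_sum[symmetric]) simp
  finally show ?thesis by (simp add: r_def E_def)
qed


lemma powr_1m: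
  assumes "x > 0" shows "(x::real) powr (1 - r) = x * x powr (- r)"
proof -
  have "x powr (1 - r) = x powr (1 + (- r))" by simp
  also have "\<dots> = x powr 1 * x powr (- r)" by (rule powr_add)
  finally show ?thesis using assms by simp
qed

lemma case_lt1:
  assumes le: "le > 0" and l: "l > 0" and r1: "le / l < 1"
  shows "\<exists>c1 c2. c1 > 0 \<and> c2 > 0 \<and> (\<forall>n\<ge>2. c1 * real n powr (- (le/l)) \<le> Vn le l n 1 \<and>
                                           Vn le l n 1 \<le> c2 * real n powr (- (le/l)))"
proof -
  define r where "r = le/l"
  have r: "r > 0" "r < 1" using le l r1 by (auto simp: r_def)
  define c where "c = 1/(2*(1+r))"
  have c: "c > 0" using r by (simp add: c_def)
  define E where "E = exp (- r - (2*r+2))"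
  define c1 where "c1 = E * 3 powr (r - 1) / (r + 2)"
  define c2 where "c2 = 2 / (1 - r) + 2 powr r / c"
  have c1: "c1 > 0" using r by (simp add: c1_def E_def)
  have c2: "c2 > 0" using r c by (simp add: c2_def add_pos_pos)
  have a: "aexp r = r" using r by (simp add: aexp_le1)
  show ?thesis
  proof (intro exI conjI allI impI)
    fix n :: nat assume n: "n \<ge> 2"
    define N where "N = real n"
    have N: "N \<ge> 2" using n by (simp add: N_def)
    have h1: "Vn le l n 1 \<le> 2 / N * (\<Sum>m\<in>{1..n}. real m powr (- r)) + 2 powr r / c * N powr (- r)"
      using F_upper[OF le l n] by (simp add: a[unfolded r_def] r_def c_def N_def)
    have h2: "(\<Sum>m\<in>{1..n}. real m powr (- r)) \<le> N * N powr (- r) / (1 - r)"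
      using sum_powr_upper[of "1 - r" n] r N by (simp add: N_def powr_1m)
    have h3: "2 / N * (\<Sum>m\<in>{1..n}. real m powr (- r)) \<le> 2 / N * (N * N powr (- r) / (1 - r))"
      using h2 N by (intro mult_left_mono) auto
    have h4: "2 / N * (N * N powr (- r) / (1 - r)) + 2 powr r / c * N powr (- r) = c2 * N powr (- r)"
      using N by (simp add: c2_def field_simps)
    have "Vn le l n 1 \<le> c2 * N powr (- r)" using h1 h3 h4 by linarith
    then show "Vn le l n 1 \<le> c2 * real n powr (- (le/l))" by (simp add: N_def r_def)
    define M where "M = n div 2"
    have Mn: "n \<le> 3 * M" using n unfolding M_def by presburger
    have M: "M \<ge> 1" "real n \<le> 3 * real M" using n Mn by (auto simp: M_def)
    have K0: "E / (N * (r + 2)) \<ge> 0" using N r by (simp add: E_def)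
    have l1: "c1 * N powr (- r) = E / (N * (r + 2)) * ((N / 3) powr (1 - r))"
    proof -
      have "(N / 3) powr (1 - r) = N * N powr (- r) * 3 powr (r - 1)"
        using N by (simp add: powr_divide powr_1m powr_minus_divide powr_diff)
      moreover have "E / (N * (r + 2)) * (N * (N powr (- r) * 3 powr (r - 1))) = E * (N powr (- r) * 3 powr (r - 1)) / (r + 2)"
        using N by simp
      ultimately show ?thesis by (simp add: c1_def ac_simps)
    qed
    have l2: "(N / 3) powr (1 - r) \<le> real M powr (1 - r)"
      using M N r by (intro powr_mono2) (auto simp: N_def)
    have l3: "real M powr (1 - r) = (\<Sum>m\<in>{1..M}. real M powr (- r))"
      using M by (simp add: powr_1m)
    have l4: "(\<Sum>m\<in>{1..M}. real M powr (- r)) \<le> (\<Sum>m\<in>{1..M}. real m powr (- r))"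
      using r by (intro sum_mono powr_mono2') auto
    have l5: "E / (N * (r + 2)) * (\<Sum>m\<in>{1..M}. real m powr (- r)) \<le> Vn le l n 1"
      using F_lower_sum[OF le l n] by (simp add: E_def r_def M_def N_def)
    have "(N / 3) powr (1 - r) \<le> (\<Sum>m\<in>{1..M}. real m powr (- r))" using l2 l3 l4 by linarith
    then have "E / (N * (r + 2)) * ((N / 3) powr (1 - r)) \<le> E / (N * (r + 2)) * (\<Sum>m\<in>{1..M}. real m powr (- r))"
      using K0 by (rule mult_left_mono)
    then have "c1 * N powr (- r) \<le> Vn le l n 1" using l1 l5 by linarith
    then show "c1 * real n powr (- (le/l)) \<le> Vn le l n 1" by (simp add: N_def r_def)
  qed (use c1 c2 in auto)
qed

lemma sum_inv_harm: "(\<Sum>m\<in>{1..M}. real m powr (- 1)) = harm M"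
  unfolding harm_def by (rule sum.cong) (auto simp: powr_minus_divide inverse_eq_divide)

lemma case_eq1:
  assumes le: "le > 0" and l: "l > 0" and r1: "le / l = 1"
  shows "\<exists>c1 c2. c1 > 0 \<and> c2 > 0 \<and> (\<forall>n\<ge>3. c1 * (ln (real n) / real n) \<le> Vn le l n 1 \<and>
                                           Vn le l n 1 \<le> c2 * (ln (real n) / real n))"
proof -
  define E where "E = exp (- 1 - (2*1+2::real))"
  have a: "aexp 1 = 1" by (simp add: aexp_le1)
  show ?thesis
  proof (intro exI conjI allI impI)
    fix n :: nat assume n3: "n \<ge> 3"
    then have n: "n \<ge> 2" by simp
    define N where "N = real n"
    have N: "N \<ge> 3" using n3 by (simp add: N_def)
    have lnN: "ln N \<ge> 1"
    proof -
      have "exp 1 \<le> N" using exp_le N by linarith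
      then show ?thesis using ln_ge_iff[of N 1] N by simp
    qed
    have h1: "Vn le l n 1 \<le> 2 / N * (\<Sum>m\<in>{1..n}. real m powr (- 1)) + 2 powr 1 / (1/(2*(1+1))) * N powr (- 1)"
      using F_upper[OF le l n] by (simp add: r1 a N_def)
    have h2: "(\<Sum>m\<in>{1..n}. real m powr (- 1)) \<le> 2 * ln N"
    proof -
      have "(\<Sum>m\<in>{1..n}. real m powr (- 1)) = (\<Sum>m\<in>{1..n}. 1 / real m)"
        by (rule sum.cong) (auto simp: powr_minus_divide)
      also have "\<dots> \<le> 1 + ln N" unfolding N_def using n by (intro harm_upper) simp
      finally show ?thesis using lnN by linarith
    qed
    have h3: "2 / N * (\<Sum>m\<in>{1..n}. real m powr (- 1)) \<le> 2 / N * (2 * ln N)"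
      using h2 N by (intro mult_left_mono) auto
    have h4: "2 powr 1 / (1/(2*(1+1))) * N powr (- 1) = 8 / N" using N by (simp add: powr_minus_divide)
    have h5: "8 / N \<le> 8 * (ln N / N)" using lnN N by (simp add: divide_right_mono)
    have h6: "2 / N * (2 * ln N) = 4 * (ln N / N)" by simp
    have "Vn le l n 1 \<le> 12 * (ln N / N)" using h1 h3 h4 h5 h6 by linarith
    then show "Vn le l n 1 \<le> 12 * (ln (real n) / real n)" by (simp add: N_def)
    define M where "M = n div 2"
    have Mn: "n + 1 \<le> 2 * (M + 1)" unfolding M_def by presburger
    have M: "M \<ge> 1" using n by (simp add: M_def)
    have l5: "E / (N * (1 + 2)) * (\<Sum>m\<in>{1..M}. real m powr (- 1)) \<le> Vn le l n 1"
      using F_lower_sum[OF le l n] by (simp add: E_def r1 M_def N_def)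
    have l4: "(\<Sum>m\<in>{1..M}. real m powr (- 1)) \<ge> ln N / 2"
    proof -
      have "ln (real M + 1) \<le> harm M" by (rule ln_le_harm)
      moreover have "ln N / 2 \<le> ln (real M + 1)"
      proof -
        have p: "(N + 1) / 2 > 0" using N by simp
        have "(N + 1) / 2 \<le> real M + 1" using Mn by (simp add: N_def)
        then have "ln ((N + 1) / 2) \<le> ln (real M + 1)" using p by simp
        moreover have "ln N \<le> 2 * ln ((N + 1) / 2)"
        proof -
          have sq: "((N + 1) / 2) ^ 2 = N + ((N - 1) / 2) ^ 2" by (simp add: power2_eq_square field_simps)
          have "N \<le> ((N + 1) / 2) ^ 2" unfolding sq by simp
          then have "ln N \<le> ln (((N + 1) / 2) ^ 2)" using N by simp
          also have "\<dots> = 2 * ln ((N + 1) / 2)" by (simp add: ln_realpow)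
          finally show ?thesis .
        qed
        ultimately show ?thesis by linarith
      qed
      ultimately show ?thesis using sum_inv_harm[of M] by linarith
    qed
    have K0: "E / (N * (1 + 2)) \<ge> 0" using N by (simp add: E_def)
    have "E / (N * (1 + 2)) * (ln N / 2) \<le> E / (N * (1 + 2)) * (\<Sum>m\<in>{1..M}. real m powr (- 1))"
      using l4 K0 by (rule mult_left_mono)
    moreover have "E / (N * (1 + 2)) * (ln N / 2) = E / 6 * (ln N / N)" by simp
    ultimately have "E / 6 * (ln N / N) \<le> Vn le l n 1" using l5 by linarith
    then show "E / 6 * (ln (real n) / real n) \<le> Vn le l n 1" by (simp add: N_def)
  qed (auto simp: E_def)
qed

lemma case_gt1:
  assumes le: "le > 0" and l: "l > 0" and r1: "le / l > 1"
  shows "\<exists>c1 c2. c1 > 0 \<and> c2 > 0 \<and> (\<forall>n\<ge>2. c1 / real n \<le> Vn le l n 1 \<and> Vn le l n 1 \<le> c2 / real n)"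
proof -
  define r where "r = le/l"
  have r: "r > 1" using r1 by (simp add: r_def)
  define a where "a = aexp r"
  have a: "a > 1" using r by (simp add: a_def aexp_gt1)
  define c where "c = 1/(2*(1+r))"
  have c: "c > 0" using r by (simp add: c_def)
  define Z where "Z = (\<Sum>m. real m powr (- a))"
  have sumZ: "summable (\<lambda>m. real m powr (- a))" using a by (simp add: summable_real_powr_iff)
  have Z0: "Z \<ge> 0" unfolding Z_def using sumZ by (intro suminf_nonneg) auto
  define c2 where "c2 = 2 * Z + 2 powr a / c"
  have c2: "c2 > 0" using Z0 c by (simp add: c2_def add_nonneg_pos)
  define c1 where "c1 = 1 / (r + 2)"
  have c1: "c1 > 0" using r by (simp add: c1_def)
  show ?thesis
  proof (intro exI conjI allI impI)
    fix n :: nat assume n: "n \<ge> 2"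
    define N where "N = real n"
    have N: "N \<ge> 2" using n by (simp add: N_def)
    have h1: "Vn le l n 1 \<le> 2 / N * (\<Sum>m\<in>{1..n}. real m powr (- a)) + 2 powr a / c * N powr (- a)"
      using F_upper[OF le l n] by (simp add: a_def r_def c_def N_def)
    have h2: "(\<Sum>m\<in>{1..n}. real m powr (- a)) \<le> Z"
      unfolding Z_def by (rule sum_le_suminf[OF sumZ]) auto
    have h3: "2 / N * (\<Sum>m\<in>{1..n}. real m powr (- a)) \<le> 2 / N * Z"
      using h2 N by (intro mult_left_mono) auto
    have h4: "N powr (- a) \<le> N powr (- 1)" using a N by (intro powr_mono) auto
    have h5: "2 powr a / c * N powr (- a) \<le> 2 powr a / c * (1 / N)"
      using h4 c N by (intro mult_left_mono) (auto simp: powr_minus_divide)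
    have h6: "2 / N * Z + 2 powr a / c * (1 / N) = c2 / N" by (simp add: c2_def add_divide_distrib)
    have "Vn le l n 1 \<le> c2 / N" using h1 h3 h5 h6 by linarith
    then show "Vn le l n 1 \<le> c2 / real n" by (simp add: N_def)
    have "rr le l n 1 * pp le l n 1 \<le> (\<Sum>m\<in>{1..n}. rr le l n m * pp le l n m)"
      using n by (intro member_le_sum) (auto intro!: mult_nonneg_nonneg less_imp_le[OF rr_pos[OF le l n]] less_imp_le[OF pp_pos[OF le l]])
    also have "\<dots> = Vn le l n 1" using n by (intro V_sum[symmetric]) simp
    finally have v: "rr le l n 1 \<le> Vn le l n 1" by (simp add: pp_one')
    have "1 / (real n * (le/l + 2)) \<le> rr le l n 1" using rr_low[OF le l n] n by simp
    moreover have "c1 / real n = 1 / (real n * (le/l + 2))" by (simp add: c1_def r_def mult.commute)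
    ultimately show "c1 / real n \<le> Vn le l n 1" using v by linarith
  qed (use c1 c2 in auto)
qed


theorem theorem4:
  fixes lam_e lam :: real
  assumes "lam_e > 0" and "lam > 0"
  shows "\<exists>F :: nat \<Rightarrow> real.
    (\<forall>n\<ge>2. \<forall>S0 \<subseteq> {..<n}. ((\<lambda>t. expected_freshness lam_e lam n S0 t) \<longlongrightarrow> F n) at_top) \<and>
    (lam_e / lam < 1 \<longrightarrow> (\<exists>c1 c2. c1 > 0 \<and> c2 > 0 \<and>
        (\<forall>\<^sub>F n in sequentially. c1 * real n powr (- (lam_e / lam)) \<le> F n \<and>
                                  F n \<le> c2 * real n powr (- (lam_e / lam))))) \<and>
    (lam_e / lam = 1 \<longrightarrow> (\<exists>c1 c2. c1 > 0 \<and> c2 > 0 \<and>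
        (\<forall>\<^sub>F n in sequentially. c1 * (ln (real n) / real n) \<le> F n \<and>
                                  F n \<le> c2 * (ln (real n) / real n)))) \<and>
    (lam_e / lam > 1 \<longrightarrow> (\<exists>c1 c2. c1 > 0 \<and> c2 > 0 \<and>
        (\<forall>\<^sub>F n in sequentially. c1 / real n \<le> F n \<and> F n \<le> c2 / real n)))"
proof -
  note le = assms(1) and l = assms(2)
  define F where "F n = Vn lam_e lam n 1" for n
  have conv: "\<forall>n\<ge>2. \<forall>S0 \<subseteq> {..<n}. ((\<lambda>t. expected_freshness lam_e lam n S0 t) \<longlongrightarrow> F n) at_top"
  proof (intro allI impI)
    fix n :: nat and S0 assume n: "n \<ge> 2" and S0: "S0 \<subseteq> {..<n}"
    have e: "(\<lambda>t. expected_freshness lam_e lam n S0 t) = xA lam_e lam n S0 {0}"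
      by (rule ext) (auto simp: expected_freshness_def xA_def hit_def intro!: sum.cong)
    have "(xA lam_e lam n S0 {0} \<longlongrightarrow> vv lam_e lam n (n - 1)) at_top"
      using n by (intro xA_lim[OF le l S0]) auto
    then show "((\<lambda>t. expected_freshness lam_e lam n S0 t) \<longlongrightarrow> F n) at_top"
      unfolding e F_def Vn_def .
  qed
  have ev: "eventually P sequentially" if "\<forall>n\<ge>N. P n" for P :: "nat \<Rightarrow> bool" and N
    using that by (auto simp: eventually_sequentially)
  show ?thesis
  proof (intro exI[of _ F] conjI impI conv)
    assume r: "lam_e / lam < 1"
    obtain c1 c2 where c: "c1 > 0" "c2 > 0" "\<forall>n\<ge>2. c1 * real n powr (- (lam_e/lam)) \<le> Vn lam_e lam n 1 \<and>
                                           Vn lam_e lam n 1 \<le> c2 * real n powr (- (lam_e/lam))"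
      using case_lt1[OF le l r] by blast
    show "\<exists>c1 c2. c1 > 0 \<and> c2 > 0 \<and>
        (\<forall>\<^sub>F n in sequentially. c1 * real n powr (- (lam_e / lam)) \<le> F n \<and>
                                  F n \<le> c2 * real n powr (- (lam_e / lam)))"
      using c by (intro exI[of _ c1] exI[of _ c2] conjI ev[of 2]) (auto simp: F_def)
  next
    assume r: "lam_e / lam = 1"
    obtain c1 c2 where c: "c1 > 0" "c2 > 0" "\<forall>n\<ge>3. c1 * (ln (real n) / real n) \<le> Vn lam_e lam n 1 \<and>
                                           Vn lam_e lam n 1 \<le> c2 * (ln (real n) / real n)"
      using case_eq1[OF le l r] by blast
    show "\<exists>c1 c2. c1 > 0 \<and> c2 > 0 \<and>
        (\<forall>\<^sub>F n in sequentially. c1 * (ln (real n) / real n) \<le> F n \<and>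
                                  F n \<le> c2 * (ln (real n) / real n))"
      using c by (intro exI[of _ c1] exI[of _ c2] conjI ev[of 3]) (auto simp: F_def)
  next
    assume r: "lam_e / lam > 1"
    obtain c1 c2 where c: "c1 > 0" "c2 > 0" "\<forall>n\<ge>2. c1 / real n \<le> Vn lam_e lam n 1 \<and> Vn lam_e lam n 1 \<le> c2 / real n"
      using case_gt1[OF le l r] by blast
    show "\<exists>c1 c2. c1 > 0 \<and> c2 > 0 \<and>
        (\<forall>\<^sub>F n in sequentially. c1 / real n \<le> F n \<and> F n \<le> c2 / real n)"
      using c by (intro exI[of _ c1] exI[of _ c2] conjI ev[of 2]) (auto simp: F_def)
  qed
qed


end
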